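(* Let $\Bbbk$ be a commutative ring, $I$ a category and $(X,\eta,\theta)\colon I\to\Bbbk\text{-}\mathbf{Cat}$ an oplax functor. For each $i\in I_0$ let $Y(i)$ be a small $\Bbbk$-category and $L_i\colon X(i)\to Y(i)$ a left adjoint of $R_i\colon Y(i)\to X(i)$ with unit $\varepsilon_i\colon\mathrm{id}_{X(i)}\Rightarrow R_iL_i$ and counit $\zeta_i\colon L_iR_i\Rightarrow\mathrm{id}_{Y(i)}$. Define $Y(a):=L_jX(a)R_i\colon Y(i)\to Y(j)$ for $a\colon i\to j$; $\eta'_i:=\zeta_i\circ L_i\eta_iR_i\colon Y(\mathrm{id}_i)\Rightarrow\mathrm{id}_{Y(i)}$; and for $i\xrightarrow{a}j\xrightarrow{b}k$, $\theta'_{b,a}:=L_kX(b)\varepsilon_jX(a)R_i\circ L_k\theta_{b,a}R_i\colon Y(ba)\Rightarrow Y(b)Y(a)$. Then: (1) $(Y,\eta',\theta')$ is an oplax functor $I\to\Bbbk\text{-}\mathbf{Cat}$; (2) setting $R(i):=R_i$ and $\phi^R(a):=\varepsilon_jX(a)R_i$ for $a\colon i\to j$, $(R,\phi^R)\colon Y\to X$ is a $1$-morphism in $\overleftarrow{\operatorname{Oplax}}(I,\Bbbk\text{-}\mathbf{Cat})$; (3) if moreover every $\varepsilon_i$ is an isomorphism, then (a) $\phi^R(a)$ is an isomorphism for every morphism $a$ of $I$, and (b) setting $L(i):=L_i$ and $\phi^L(a):=L_jX(a)\varepsilon_i^{-1}$ for $a\colon i\to j$, $(L,\phi^L)\colon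 X\to Y$ is a $1$-morphism in $\overleftarrow{\operatorname{Oplax}}(I,\Bbbk\text{-}\mathbf{Cat})$ with all $\phi^L(a)$ isomorphisms.
   Context: An oplax functor $(X,\eta,\theta)\colon I\to\mathbf{C}$ into a 2-category consists of objects $X(i)$, 1-morphisms $X(a)\colon X(i)\to X(j)$, 2-morphisms $\eta_i\colon X(\mathrm{id}_i)\Rightarrow\mathrm{id}_{X(i)}$ and $\theta_{b,a}\colon X(ba)\Rightarrow X(b)X(a)$ with $X(a)\eta_i\circ\theta_{a,\mathrm{id}_i}=\mathrm{id}_{X(a)}$, $\eta_jX(a)\circ\theta_{\mathrm{id}_j,a}=\mathrm{id}_{X(a)}$, and $X(c)\theta_{b,a}\circ\theta_{c,ba}=\theta_{c,b}X(a)\circ\theta_{cb,a}$. $\overleftarrow{\operatorname{Oplax}}(I,\mathbf{C})$ is the 2-category of oplax functors $I\to\mathbf{C}$, where a 1-morphism $(F,\psi)\colon(X,\eta,\theta)\to(X',\eta',\theta')$ consists of 1-morphisms $F(i)\colon X(i)\to X'(i)$ and 2-morphisms $\psi(a)\colon X'(a)F(i)\Rightarrow F(j)X(a)$ ($a\colon i\to j$) with $F(i)\eta_i\circ\psi(\mathrm{id}_i)=\eta'_iF(i)$ and $F(k)\theta_{b,a}\circ\psi(ba)=\psi(b)X(a)\circ X'(b)\psi(a)\circ\theta'_{b,a}F(i)$. *)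

theory Defs
  imports Main
begin

text \<open>A small category: a set of objects, hom-sets, a composition
  (cmp g f = g after f) and identities.  Hom-sets are required to be pairwise
  disjoint (each arrow has a unique domain and codomain).\<close>

record ('o, 'm) cat =
  Ob  :: "'o set"
  Hom :: "'o \<Rightarrow> 'o \<Rightarrow> 'm set"
  cmp :: "'m \<Rightarrow> 'm \<Rightarrow> 'm"
  idm :: "'o \<Rightarrow> 'm"

definition is_category :: "('o, 'm, 'x) cat_scheme \<Rightarrow> bool" where
  "is_category C \<longleftrightarrow>
     (\<forall>x y. Hom C x y \<noteq> {} \<longrightarrow> x \<in> Ob C \<and> y \<in> Ob C) \<and>
     (\<forall>x y x' y' f. f \<in> Hom C x y \<and> f \<in> Hom C x' y' \<longrightarrow> x = x' \<and> y = y') \<and>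
     (\<forall>x\<in>Ob C. idm C x \<in> Hom C x x) \<and>
     (\<forall>x y z f g. f \<in> Hom C x y \<and> g \<in> Hom C y z \<longrightarrow> cmp C g f \<in> Hom C x z) \<and>
     (\<forall>w x y z f g h. f \<in> Hom C w x \<and> g \<in> Hom C x y \<and> h \<in> Hom C y z \<longrightarrow>
         cmp C h (cmp C g f) = cmp C (cmp C h g) f) \<and>
     (\<forall>x y f. f \<in> Hom C x y \<longrightarrow> cmp C (idm C y) f = f \<and> cmp C f (idm C x) = f)"

record ('o, 'm, 'k) kcat = "('o, 'm) cat" +
  kadd   :: "'m \<Rightarrow> 'm \<Rightarrow> 'm"
  ksmult :: "'k \<Rightarrow> 'm \<Rightarrow> 'm"
  kzero  :: "'o \<Rightarrow> 'o \<Rightarrow> 'm"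

definition is_kcategory :: "('o, 'm, 'k::comm_ring_1, 'x) kcat_scheme \<Rightarrow> bool" where
  "is_kcategory C \<longleftrightarrow> is_category C \<and>
     (\<forall>x\<in>Ob C. \<forall>y\<in>Ob C.
        kzero C x y \<in> Hom C x y \<and>
        (\<forall>f\<in>Hom C x y. \<forall>g\<in>Hom C x y. kadd C f g \<in> Hom C x y) \<and>
        (\<forall>r. \<forall>f\<in>Hom C x y. ksmult C r f \<in> Hom C x y) \<and>
        (\<forall>f\<in>Hom C x y. \<forall>g\<in>Hom C x y. \<forall>h\<in>Hom C x y.
            kadd C (kadd C f g) h = kadd C f (kadd C g h)) \<and>
        (\<forall>f\<in>Hom C x y. \<forall>g\<in>Hom C x y. kadd C f g = kadd C g f) \<and>
        (\<forall>f\<in>Hom C x y. kadd C (kzero C x y) f = f) \<and>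
        (\<forall>f\<in>Hom C x y. \<exists>g\<in>Hom C x y. kadd C f g = kzero C x y) \<and>
        (\<forall>r. \<forall>f\<in>Hom C x y. \<forall>g\<in>Hom C x y.
            ksmult C r (kadd C f g) = kadd C (ksmult C r f) (ksmult C r g)) \<and>
        (\<forall>r s. \<forall>f\<in>Hom C x y. ksmult C (r + s) f = kadd C (ksmult C r f) (ksmult C s f)) \<and>
        (\<forall>r s. \<forall>f\<in>Hom C x y. ksmult C (r * s) f = ksmult C r (ksmult C s f)) \<and>
        (\<forall>f\<in>Hom C x y. ksmult C 1 f = f)) \<and>
     (\<forall>x y z f f' g g'. f \<in> Hom C x y \<and> f' \<in> Hom C x y \<and> g \<in> Hom C y z \<and> g' \<in> Hom C y z \<longrightarrow>
        cmp C (kadd C g g') f = kadd C (cmp C g f) (cmp C g' f) \<and>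
        cmp C g (kadd C f f') = kadd C (cmp C g f) (cmp C g f')) \<and>
     (\<forall>x y z f g r. f \<in> Hom C x y \<and> g \<in> Hom C y z \<longrightarrow>
        cmp C (ksmult C r g) f = ksmult C r (cmp C g f) \<and>
        cmp C g (ksmult C r f) = ksmult C r (cmp C g f))"

type_synonym ('o, 'm) func = "('o \<Rightarrow> 'o) \<times> ('m \<Rightarrow> 'm)"

abbreviation fo :: "('o, 'm) func \<Rightarrow> 'o \<Rightarrow> 'o" where "fo F \<equiv> fst F"
abbreviation fm :: "('o, 'm) func \<Rightarrow> 'm \<Rightarrow> 'm" where "fm F \<equiv> snd F"

definition idF :: "('o, 'm) func" where "idF = (\<lambda>x. x, \<lambda>f. f)"

definition fcompose :: "('o, 'm) func \<Rightarrow> ('o, 'm) func \<Rightarrow> ('o, 'm) func" where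
  "fcompose G F = (fo G \<circ> fo F, fm G \<circ> fm F)"

definition is_kfunctor ::
  "('o, 'm, 'k::comm_ring_1) kcat \<Rightarrow> ('o, 'm, 'k) kcat \<Rightarrow> ('o, 'm) func \<Rightarrow> bool" where
  "is_kfunctor C D F \<longleftrightarrow>
     (\<forall>x\<in>Ob C. fo F x \<in> Ob D) \<and>
     (\<forall>x y f. f \<in> Hom C x y \<longrightarrow> fm F f \<in> Hom D (fo F x) (fo F y)) \<and>
     (\<forall>x\<in>Ob C. fm F (idm C x) = idm D (fo F x)) \<and>
     (\<forall>x y z f g. f \<in> Hom C x y \<and> g \<in> Hom C y z \<longrightarrow> fm F (cmp C g f) = cmp D (fm F g) (fm F f)) \<and>
     (\<forall>x y f g. f \<in> Hom C x y \<and> g \<in> Hom C x y \<longrightarrow> fm F (kadd C f g) = kadd D (fm F f) (fm F g)) \<and>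
     (\<forall>x y f r. f \<in> Hom C x y \<longrightarrow> fm F (ksmult C r f) = ksmult D r (fm F f))"

definition is_nat_trans ::
  "('o, 'm, 'k) kcat \<Rightarrow> ('o, 'm, 'k) kcat \<Rightarrow> ('o, 'm) func \<Rightarrow> ('o, 'm) func \<Rightarrow> ('o \<Rightarrow> 'm) \<Rightarrow> bool" where
  "is_nat_trans C D F G \<alpha> \<longleftrightarrow>
     (\<forall>x\<in>Ob C. \<alpha> x \<in> Hom D (fo F x) (fo G x)) \<and>
     (\<forall>x y f. f \<in> Hom C x y \<longrightarrow> cmp D (fm G f) (\<alpha> x) = cmp D (\<alpha> y) (fm F f))"

definition is_nat_iso ::
  "('o, 'm, 'k) kcat \<Rightarrow> ('o, 'm, 'k) kcat \<Rightarrow> ('o, 'm) func \<Rightarrow> ('o, 'm) func \<Rightarrow> ('o \<Rightarrow> 'm) \<Rightarrow> bool" where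
  "is_nat_iso C D F G \<alpha> \<longleftrightarrow> is_nat_trans C D F G \<alpha> \<and>
     (\<exists>\<beta>. is_nat_trans C D G F \<beta> \<and>
        (\<forall>x\<in>Ob C. cmp D (\<beta> x) (\<alpha> x) = idm D (fo F x) \<and> cmp D (\<alpha> x) (\<beta> x) = idm D (fo G x)))"

definition is_adjunction ::
  "('o, 'm, 'k::comm_ring_1) kcat \<Rightarrow> ('o, 'm, 'k) kcat \<Rightarrow> ('o, 'm) func \<Rightarrow> ('o, 'm) func
     \<Rightarrow> ('o \<Rightarrow> 'm) \<Rightarrow> ('o \<Rightarrow> 'm) \<Rightarrow> bool" where
  "is_adjunction C D L R \<epsilon> \<zeta> \<longleftrightarrow>
     is_kfunctor C D L \<and> is_kfunctor D C R \<and>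
     is_nat_trans C C idF (fcompose R L) \<epsilon> \<and> is_nat_trans D D (fcompose L R) idF \<zeta> \<and>
     (\<forall>x\<in>Ob C. cmp D (\<zeta> (fo L x)) (fm L (\<epsilon> x)) = idm D (fo L x)) \<and>
     (\<forall>y\<in>Ob D. cmp C (fm R (\<zeta> y)) (\<epsilon> (fo R y)) = idm C (fo R y))"

definition arr_dom :: "('io, 'ia, 'x) cat_scheme \<Rightarrow> 'ia \<Rightarrow> 'io" where
  "arr_dom I a = (THE i. \<exists>j. a \<in> Hom I i j)"

definition arr_cod :: "('io, 'ia, 'x) cat_scheme \<Rightarrow> 'ia \<Rightarrow> 'io" where
  "arr_cod I a = (THE j. \<exists>i. a \<in> Hom I i j)"

text \<open>(Xc, Xf, eta, theta): Xc i = X(i), Xf a = X(a), eta i = eta_i,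
  theta b a = theta_{b,a}.\<close>
definition is_oplax_functor ::
  "('io, 'ia) cat \<Rightarrow> ('io \<Rightarrow> ('o, 'm, 'k::comm_ring_1) kcat) \<Rightarrow> ('ia \<Rightarrow> ('o, 'm) func)
     \<Rightarrow> ('io \<Rightarrow> 'o \<Rightarrow> 'm) \<Rightarrow> ('ia \<Rightarrow> 'ia \<Rightarrow> 'o \<Rightarrow> 'm) \<Rightarrow> bool" where
  "is_oplax_functor I Xc Xf \<eta> \<theta> \<longleftrightarrow>
     (\<forall>i\<in>Ob I. is_kcategory (Xc i)) \<and>
     (\<forall>i j a. a \<in> Hom I i j \<longrightarrow> is_kfunctor (Xc i) (Xc j) (Xf a)) \<and>
     (\<forall>i\<in>Ob I. is_nat_trans (Xc i) (Xc i) (Xf (idm I i)) idF (\<eta> i)) \<and>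
     (\<forall>i j k a b. a \<in> Hom I i j \<and> b \<in> Hom I j k \<longrightarrow>
        is_nat_trans (Xc i) (Xc k) (Xf (cmp I b a)) (fcompose (Xf b) (Xf a)) (\<theta> b a)) \<and>
     (\<forall>i j a. a \<in> Hom I i j \<longrightarrow> (\<forall>x\<in>Ob (Xc i).
        cmp (Xc j) (fm (Xf a) (\<eta> i x)) (\<theta> a (idm I i) x) = idm (Xc j) (fo (Xf a) x) \<and>
        cmp (Xc j) (\<eta> j (fo (Xf a) x)) (\<theta> (idm I j) a x) = idm (Xc j) (fo (Xf a) x))) \<and>
     (\<forall>i j k l a b c. a \<in> Hom I i j \<and> b \<in> Hom I j k \<and> c \<in> Hom I k l \<longrightarrow>
        (\<forall>x\<in>Ob (Xc i).
          cmp (Xc l) (fm (Xf c) (\<theta> b a x)) (\<theta> c (cmp I b a) x)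
          = cmp (Xc l) (\<theta> c b (fo (Xf a) x)) (\<theta> (cmp I c b) a x)))"

definition is_oplax_morphism ::
  "('io, 'ia) cat
   \<Rightarrow> ('io \<Rightarrow> ('o, 'm, 'k::comm_ring_1) kcat) \<Rightarrow> ('ia \<Rightarrow> ('o, 'm) func)
     \<Rightarrow> ('io \<Rightarrow> 'o \<Rightarrow> 'm) \<Rightarrow> ('ia \<Rightarrow> 'ia \<Rightarrow> 'o \<Rightarrow> 'm)
   \<Rightarrow> ('io \<Rightarrow> ('o, 'm, 'k) kcat) \<Rightarrow> ('ia \<Rightarrow> ('o, 'm) func)
     \<Rightarrow> ('io \<Rightarrow> 'o \<Rightarrow> 'm) \<Rightarrow> ('ia \<Rightarrow> 'ia \<Rightarrow> 'o \<Rightarrow> 'm)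
   \<Rightarrow> ('io \<Rightarrow> ('o, 'm) func) \<Rightarrow> ('ia \<Rightarrow> 'o \<Rightarrow> 'm) \<Rightarrow> bool" where
  "is_oplax_morphism I Xc Xf \<eta> \<theta> Xc' Xf' \<eta>' \<theta>' F \<psi> \<longleftrightarrow>
     (\<forall>i\<in>Ob I. is_kfunctor (Xc i) (Xc' i) (F i)) \<and>
     (\<forall>i j a. a \<in> Hom I i j \<longrightarrow>
        is_nat_trans (Xc i) (Xc' j) (fcompose (Xf' a) (F i)) (fcompose (F j) (Xf a)) (\<psi> a)) \<and>
     (\<forall>i\<in>Ob I. \<forall>x\<in>Ob (Xc i).
        cmp (Xc' i) (fm (F i) (\<eta> i x)) (\<psi> (idm I i) x) = \<eta>' i (fo (F i) x)) \<and>
     (\<forall>i j k a b. a \<in> Hom I i j \<and> b \<in> Hom I j k \<longrightarrow> (\<forall>x\<in>Ob (Xc i).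
        cmp (Xc' k) (fm (F k) (\<theta> b a x)) (\<psi> (cmp I b a) x)
        = cmp (Xc' k) (\<psi> b (fo (Xf a) x))
            (cmp (Xc' k) (fm (Xf' b) (\<psi> a x)) (\<theta>' b a (fo (F i) x)))))"

end

theory Submission
  imports Defs
begin


definition arr :: "('o, 'm, 'x) cat_scheme \<Rightarrow> 'm \<Rightarrow> bool" where
  "arr C f \<longleftrightarrow> (\<exists>x y. f \<in> Hom C x y)"

lemma catD: assumes "is_category C" shows
  "\<forall>x y. Hom C x y \<noteq> {} \<longrightarrow> x \<in> Ob C \<and> y \<in> Ob C"
  "\<forall>x y x' y' f. f \<in> Hom C x y \<and> f \<in> Hom C x' y' \<longrightarrow> x = x' \<and> y = y'"
  "\<forall>x\<in>Ob C. idm C x \<in> Hom C x x"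
  "\<forall>x y z f g. f \<in> Hom C x y \<and> g \<in> Hom C y z \<longrightarrow> cmp C g f \<in> Hom C x z"
  "\<forall>w x y z f g h. f \<in> Hom C w x \<and> g \<in> Hom C x y \<and> h \<in> Hom C y z \<longrightarrow>
         cmp C h (cmp C g f) = cmp C (cmp C h g) f"
  "\<forall>x y f. f \<in> Hom C x y \<longrightarrow> cmp C (idm C y) f = f \<and> cmp C f (idm C x) = f"
  using assms unfolding is_category_def
  by - ((erule conjE)+, assumption)+

lemma C_ob: "is_category C \<Longrightarrow> f \<in> Hom C x y \<Longrightarrow> x \<in> Ob C \<and> y \<in> Ob C"
  using catD(1) by fast
lemma C_uniq: "is_category C \<Longrightarrow> f \<in> Hom C x y \<Longrightarrow> f \<in> Hom C x' y' \<Longrightarrow> x = x' \<and> y = y'"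
  using catD(2) by fast
lemma C_id: "is_category C \<Longrightarrow> x \<in> Ob C \<Longrightarrow> idm C x \<in> Hom C x x"
  using catD(3) by fast
lemma C_cmp: "is_category C \<Longrightarrow> f \<in> Hom C x y \<Longrightarrow> g \<in> Hom C y z \<Longrightarrow> cmp C g f \<in> Hom C x z"
  using catD(4) by fast
lemma C_assoc: "is_category C \<Longrightarrow> f \<in> Hom C w x \<Longrightarrow> g \<in> Hom C x y \<Longrightarrow> h \<in> Hom C y z \<Longrightarrow>
         cmp C (cmp C h g) f = cmp C h (cmp C g f)"
  using catD(5) by metis
lemma C_idl: "is_category C \<Longrightarrow> f \<in> Hom C x y \<Longrightarrow> cmp C (idm C y) f = f"
  using catD(6) by fast
lemma C_idr: "is_category C \<Longrightarrow> f \<in> Hom C x y \<Longrightarrow> cmp C f (idm C x) = f"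
  using catD(6) by fast

lemma hom_dc: "is_category C \<Longrightarrow> f \<in> Hom C x y \<Longrightarrow> arr_dom C f = x \<and> arr_cod C f = y"
proof -
  assume c: "is_category C" and f: "f \<in> Hom C x y"
  have "arr_dom C f = x" unfolding arr_dom_def
    by (rule the_equality) (use f C_uniq[OF c f] in blast)+
  moreover have "arr_cod C f = y" unfolding arr_cod_def
    by (rule the_equality) (use f C_uniq[OF c f] in blast)+
  ultimately show ?thesis by blast
qed

lemma hom_iff: "is_category C \<Longrightarrow> (f \<in> Hom C x y) = (arr C f \<and> arr_dom C f = x \<and> arr_cod C f = y)"
  using hom_dc unfolding arr_def by metis

lemma arr_hom: "is_category C \<Longrightarrow> arr C f \<Longrightarrow> f \<in> Hom C (arr_dom C f) (arr_cod C f)"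
  using hom_dc unfolding arr_def by metis

lemma dom_ob[simp]: "is_category C \<Longrightarrow> arr C f \<Longrightarrow> arr_dom C f \<in> Ob C"
  by (rule conjunct1[OF C_ob[OF _ arr_hom]])
lemma cod_ob[simp]: "is_category C \<Longrightarrow> arr C f \<Longrightarrow> arr_cod C f \<in> Ob C"
  by (rule conjunct2[OF C_ob[OF _ arr_hom]])
lemma cmp_hom: "is_category C \<Longrightarrow> arr C f \<Longrightarrow> arr C g \<Longrightarrow> arr_cod C f = arr_dom C g \<Longrightarrow>
   cmp C g f \<in> Hom C (arr_dom C f) (arr_cod C g)"
proof -
  assume c: "is_category C" and fa: "arr C f" and ga: "arr C g" and e: "arr_cod C f = arr_dom C g"
  have "f \<in> Hom C (arr_dom C f) (arr_dom C g)" using arr_hom[OF c fa] e by simp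
  then show ?thesis by (rule C_cmp[OF c _ arr_hom[OF c ga]])
qed
lemma arr_I: "f \<in> Hom C x y \<Longrightarrow> arr C f" unfolding arr_def by blast
lemma arr_cmp[simp]: "is_category C \<Longrightarrow> arr C f \<Longrightarrow> arr C g \<Longrightarrow> arr_cod C f = arr_dom C g \<Longrightarrow> arr C (cmp C g f)"
  by (rule arr_I[OF cmp_hom])
lemma dom_cmp[simp]: "is_category C \<Longrightarrow> arr C f \<Longrightarrow> arr C g \<Longrightarrow> arr_cod C f = arr_dom C g \<Longrightarrow> arr_dom C (cmp C g f) = arr_dom C f"
  by (rule conjunct1[OF hom_dc[OF _ cmp_hom]])
lemma cod_cmp[simp]: "is_category C \<Longrightarrow> arr C f \<Longrightarrow> arr C g \<Longrightarrow> arr_cod C f = arr_dom C g \<Longrightarrow> arr_cod C (cmp C g f) = arr_cod C g"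
  by (rule conjunct2[OF hom_dc[OF _ cmp_hom]])
lemma assoc[simp]: "is_category C \<Longrightarrow> arr C f \<Longrightarrow> arr C g \<Longrightarrow> arr C h \<Longrightarrow> arr_cod C f = arr_dom C g \<Longrightarrow> arr_cod C g = arr_dom C h \<Longrightarrow>
   cmp C (cmp C h g) f = cmp C h (cmp C g f)"
proof -
  assume c: "is_category C" and a: "arr C f" "arr C g" "arr C h" and e: "arr_cod C f = arr_dom C g" "arr_cod C g = arr_dom C h"
  show ?thesis using C_assoc[OF c arr_hom[OF c a(1)] _ arr_hom[OF c a(3)]] arr_hom[OF c a(2)] e by simp
qed
lemma arr_id[simp]: "is_category C \<Longrightarrow> x \<in> Ob C \<Longrightarrow> arr C (idm C x)"
  by (rule arr_I[OF C_id])
lemma dom_id[simp]: "is_category C \<Longrightarrow> x \<in> Ob C \<Longrightarrow> arr_dom C (idm C x) = x"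
  by (rule conjunct1[OF hom_dc[OF _ C_id]])
lemma cod_id[simp]: "is_category C \<Longrightarrow> x \<in> Ob C \<Longrightarrow> arr_cod C (idm C x) = x"
  by (rule conjunct2[OF hom_dc[OF _ C_id]])
lemma idl[simp]: "is_category C \<Longrightarrow> arr C f \<Longrightarrow> arr_cod C f = y \<Longrightarrow> cmp C (idm C y) f = f"
proof -
  assume c: "is_category C" and a: "arr C f" and e: "arr_cod C f = y"
  show ?thesis using C_idl[OF c arr_hom[OF c a]] e by simp
qed
lemma idr[simp]: "is_category C \<Longrightarrow> arr C f \<Longrightarrow> arr_dom C f = x \<Longrightarrow> cmp C f (idm C x) = f"
proof -
  assume c: "is_category C" and a: "arr C f" and e: "arr_dom C f = x"
  show ?thesis using C_idr[OF c arr_hom[OF c a]] e by simp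
qed

lemma tail: "is_category C \<Longrightarrow> arr C f \<Longrightarrow> arr C g \<Longrightarrow> arr C h \<Longrightarrow> arr C k \<Longrightarrow>
  arr_cod C f = arr_dom C g \<Longrightarrow> arr_cod C h = arr_dom C k \<Longrightarrow> arr_dom C f = arr_dom C h \<Longrightarrow>
  cmp C g f = cmp C k h \<Longrightarrow> arr C t \<Longrightarrow> arr_cod C t = arr_dom C f \<Longrightarrow>
  cmp C g (cmp C f t) = cmp C k (cmp C h t)"
proof -
  assume c: "is_category C" and a: "arr C f" "arr C g" "arr C h" "arr C k" "arr C t"
   and e: "arr_cod C f = arr_dom C g" "arr_cod C h = arr_dom C k" "arr_dom C f = arr_dom C h"
     "cmp C g f = cmp C k h" "arr_cod C t = arr_dom C f"
  have "cmp C g (cmp C f t) = cmp C (cmp C g f) t" using assoc[OF c a(5) a(1) a(2)] e by simp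
  also have "\<dots> = cmp C (cmp C k h) t" using e by simp
  also have "\<dots> = cmp C k (cmp C h t)" using assoc[OF c a(5) a(3) a(4)] e by simp
  finally show ?thesis .
qed

lemma tail_id: "is_category C \<Longrightarrow> arr C f \<Longrightarrow> arr C g \<Longrightarrow> z \<in> Ob C \<Longrightarrow>
  arr_cod C f = arr_dom C g \<Longrightarrow> cmp C g f = idm C z \<Longrightarrow> arr C t \<Longrightarrow> arr_cod C t = arr_dom C f \<Longrightarrow>
  cmp C g (cmp C f t) = t"
proof -
  assume c: "is_category C" and a: "arr C f" "arr C g" "arr C t" and z: "z \<in> Ob C"
   and e: "arr_cod C f = arr_dom C g" "cmp C g f = idm C z" "arr_cod C t = arr_dom C f"
  have "arr_dom C (idm C z) = arr_dom C f" using dom_cmp[OF c a(1) a(2) e(1)] e(2) by simp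
  then have zf: "z = arr_dom C f" using z c by simp
  have "cmp C g (cmp C f t) = cmp C (cmp C g f) t" using assoc[OF c a(3) a(1) a(2)] e by simp
  also have "\<dots> = t" using e zf c a by simp
  finally show ?thesis .
qed

lemma kf_ob: "is_kfunctor C D F \<Longrightarrow> x \<in> Ob C \<Longrightarrow> fo F x \<in> Ob D"
  unfolding is_kfunctor_def by blast
lemma kf_hom: "is_kfunctor C D F \<Longrightarrow> f \<in> Hom C x y \<Longrightarrow> fm F f \<in> Hom D (fo F x) (fo F y)"
  unfolding is_kfunctor_def by blast
lemma kf_arr: "is_kfunctor C D F \<Longrightarrow> is_category C \<Longrightarrow> is_category D \<Longrightarrow> arr C f \<Longrightarrow> arr D (fm F f)"
  using kf_hom arr_hom arr_def by metis
lemma kf_dom: "is_kfunctor C D F \<Longrightarrow> is_category C \<Longrightarrow> is_category D \<Longrightarrow> arr C f \<Longrightarrow> arr_dom D (fm F f) = fo F (arr_dom C f)"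
  using kf_hom arr_hom hom_dc by metis
lemma kf_cod: "is_kfunctor C D F \<Longrightarrow> is_category C \<Longrightarrow> is_category D \<Longrightarrow> arr C f \<Longrightarrow> arr_cod D (fm F f) = fo F (arr_cod C f)"
  using kf_hom arr_hom hom_dc by metis
lemma kf_cmp0: "is_kfunctor C D F \<Longrightarrow> f \<in> Hom C x y \<Longrightarrow> g \<in> Hom C y z \<Longrightarrow>
   fm F (cmp C g f) = cmp D (fm F g) (fm F f)"
  unfolding is_kfunctor_def by blast
lemma kf_cmp: "is_kfunctor C D F \<Longrightarrow> is_category C \<Longrightarrow> arr C f \<Longrightarrow> arr C g \<Longrightarrow> arr_cod C f = arr_dom C g \<Longrightarrow>
   fm F (cmp C g f) = cmp D (fm F g) (fm F f)"
  using arr_hom kf_cmp0 by metis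
lemma kf_id: "is_kfunctor C D F \<Longrightarrow> x \<in> Ob C \<Longrightarrow> fm F (idm C x) = idm D (fo F x)"
  unfolding is_kfunctor_def by blast

lemma nt_hom: "is_nat_trans C D F G \<alpha> \<Longrightarrow> x \<in> Ob C \<Longrightarrow> \<alpha> x \<in> Hom D (fo F x) (fo G x)"
  unfolding is_nat_trans_def by blast
lemma nt_arr: "is_nat_trans C D F G \<alpha> \<Longrightarrow> is_category D \<Longrightarrow> x \<in> Ob C \<Longrightarrow> arr D (\<alpha> x)"
  using nt_hom arr_def by metis
lemma nt_dom: "is_nat_trans C D F G \<alpha> \<Longrightarrow> is_category D \<Longrightarrow> x \<in> Ob C \<Longrightarrow> arr_dom D (\<alpha> x) = fo F x"
  using nt_hom hom_dc by metis
lemma nt_cod: "is_nat_trans C D F G \<alpha> \<Longrightarrow> is_category D \<Longrightarrow> x \<in> Ob C \<Longrightarrow> arr_cod D (\<alpha> x) = fo G x"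
  using nt_hom hom_dc by metis
lemma nt_nat0: "is_nat_trans C D F G \<alpha> \<Longrightarrow> f \<in> Hom C x y \<Longrightarrow> cmp D (fm G f) (\<alpha> x) = cmp D (\<alpha> y) (fm F f)"
  unfolding is_nat_trans_def by blast
lemma nt_nat: "is_nat_trans C D F G \<alpha> \<Longrightarrow> is_category C \<Longrightarrow> arr C f \<Longrightarrow>
   cmp D (fm G f) (\<alpha> (arr_dom C f)) = cmp D (\<alpha> (arr_cod C f)) (fm F f)"
  using arr_hom nt_nat0 by metis

lemma fcompose_simps[simp]: "fo (fcompose G F) = fo G \<circ> fo F" "fm (fcompose G F) = fm G \<circ> fm F"
  "fo idF = (\<lambda>x. x)" "fm idF = (\<lambda>x. x)"
  by (simp_all add: fcompose_def idF_def)

lemma kf_compose: "is_kfunctor C D F \<Longrightarrow> is_kfunctor D E G \<Longrightarrow> is_kfunctor C E (fcompose G F)"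
  unfolding is_kfunctor_def by (simp; meson)


lemma tail_rule: "is_category C \<Longrightarrow> cmp C g f = cmp C k h \<Longrightarrow> arr C f \<Longrightarrow> arr C g \<Longrightarrow> arr C h \<Longrightarrow> arr C k \<Longrightarrow>
  arr_cod C f = arr_dom C g \<Longrightarrow> arr_cod C h = arr_dom C k \<Longrightarrow> arr_dom C f = arr_dom C h \<Longrightarrow>
  arr C t \<Longrightarrow> arr_cod C t = arr_dom C f \<Longrightarrow>
  cmp C g (cmp C f t) = cmp C k (cmp C h t)"
  by (rule tail)

lemma tail_id_rule: "is_category C \<Longrightarrow> cmp C g f = idm C z \<Longrightarrow> arr C f \<Longrightarrow> arr C g \<Longrightarrow> z \<in> Ob C \<Longrightarrow>
  arr_cod C f = arr_dom C g \<Longrightarrow> arr C t \<Longrightarrow> arr_cod C t = arr_dom C f \<Longrightarrow>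
  cmp C g (cmp C f t) = t"
  by (rule tail_id)

lemma kcat_cat: "is_kcategory C \<Longrightarrow> is_category C"
  unfolding is_kcategory_def by (erule conjE)

lemma oplaxD: assumes "is_oplax_functor I Xc Xf \<eta> \<theta>" shows
     "(\<forall>i\<in>Ob I. is_kcategory (Xc i))"
     "(\<forall>i j a. a \<in> Hom I i j \<longrightarrow> is_kfunctor (Xc i) (Xc j) (Xf a))"
     "(\<forall>i\<in>Ob I. is_nat_trans (Xc i) (Xc i) (Xf (idm I i)) idF (\<eta> i))"
     "(\<forall>i j k a b. a \<in> Hom I i j \<and> b \<in> Hom I j k \<longrightarrow>
        is_nat_trans (Xc i) (Xc k) (Xf (cmp I b a)) (fcompose (Xf b) (Xf a)) (\<theta> b a))"
     "(\<forall>i j a. a \<in> Hom I i j \<longrightarrow> (\<forall>x\<in>Ob (Xc i).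
        cmp (Xc j) (fm (Xf a) (\<eta> i x)) (\<theta> a (idm I i) x) = idm (Xc j) (fo (Xf a) x) \<and>
        cmp (Xc j) (\<eta> j (fo (Xf a) x)) (\<theta> (idm I j) a x) = idm (Xc j) (fo (Xf a) x)))"
     "(\<forall>i j k l a b c. a \<in> Hom I i j \<and> b \<in> Hom I j k \<and> c \<in> Hom I k l \<longrightarrow>
        (\<forall>x\<in>Ob (Xc i).
          cmp (Xc l) (fm (Xf c) (\<theta> b a x)) (\<theta> c (cmp I b a) x)
          = cmp (Xc l) (\<theta> c b (fo (Xf a) x)) (\<theta> (cmp I c b) a x)))"
proof -
  note H = assms[unfolded is_oplax_functor_def]
  show "(\<forall>i\<in>Ob I. is_kcategory (Xc i))" using H by (rule conjunct1)
  show "(\<forall>i j a. a \<in> Hom I i j \<longrightarrow> is_kfunctor (Xc i) (Xc j) (Xf a))" using conjunct2[OF H] by (rule conjunct1)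
  show "(\<forall>i\<in>Ob I. is_nat_trans (Xc i) (Xc i) (Xf (idm I i)) idF (\<eta> i))"
    using conjunct2[OF conjunct2[OF H]] by (rule conjunct1)
  show "(\<forall>i j k a b. a \<in> Hom I i j \<and> b \<in> Hom I j k \<longrightarrow>
        is_nat_trans (Xc i) (Xc k) (Xf (cmp I b a)) (fcompose (Xf b) (Xf a)) (\<theta> b a))"
    using conjunct2[OF conjunct2[OF conjunct2[OF H]]] by (rule conjunct1)
  show "(\<forall>i j a. a \<in> Hom I i j \<longrightarrow> (\<forall>x\<in>Ob (Xc i).
        cmp (Xc j) (fm (Xf a) (\<eta> i x)) (\<theta> a (idm I i) x) = idm (Xc j) (fo (Xf a) x) \<and>
        cmp (Xc j) (\<eta> j (fo (Xf a) x)) (\<theta> (idm I j) a x) = idm (Xc j) (fo (Xf a) x)))"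
    using conjunct2[OF conjunct2[OF conjunct2[OF conjunct2[OF H]]]] by (rule conjunct1)
  show "(\<forall>i j k l a b c. a \<in> Hom I i j \<and> b \<in> Hom I j k \<and> c \<in> Hom I k l \<longrightarrow>
        (\<forall>x\<in>Ob (Xc i).
          cmp (Xc l) (fm (Xf c) (\<theta> b a x)) (\<theta> c (cmp I b a) x)
          = cmp (Xc l) (\<theta> c b (fo (Xf a) x)) (\<theta> (cmp I c b) a x)))"
    using conjunct2[OF conjunct2[OF conjunct2[OF conjunct2[OF H]]]] by (rule conjunct2)
qed

lemma adjD: assumes "is_adjunction C D L R \<epsilon> \<zeta>" shows
     "is_kfunctor C D L" "is_kfunctor D C R"
     "is_nat_trans C C idF (fcompose R L) \<epsilon>" "is_nat_trans D D (fcompose L R) idF \<zeta>"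
     "(\<forall>x\<in>Ob C. cmp D (\<zeta> (fo L x)) (fm L (\<epsilon> x)) = idm D (fo L x))"
     "(\<forall>y\<in>Ob D. cmp C (fm R (\<zeta> y)) (\<epsilon> (fo R y)) = idm C (fo R y))"
proof -
  note H = assms[unfolded is_adjunction_def]
  show "is_kfunctor C D L" using H by (rule conjunct1)
  show "is_kfunctor D C R" using conjunct2[OF H] by (rule conjunct1)
  show "is_nat_trans C C idF (fcompose R L) \<epsilon>" using conjunct2[OF conjunct2[OF H]] by (rule conjunct1)
  show "is_nat_trans D D (fcompose L R) idF \<zeta>" using conjunct2[OF conjunct2[OF conjunct2[OF H]]] by (rule conjunct1)
  show "(\<forall>x\<in>Ob C. cmp D (\<zeta> (fo L x)) (fm L (\<epsilon> x)) = idm D (fo L x))"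
    using conjunct2[OF conjunct2[OF conjunct2[OF conjunct2[OF H]]]] by (rule conjunct1)
  show "(\<forall>y\<in>Ob D. cmp C (fm R (\<zeta> y)) (\<epsilon> (fo R y)) = idm C (fo R y))"
    using conjunct2[OF conjunct2[OF conjunct2[OF conjunct2[OF H]]]] by (rule conjunct2)
qed




locale L48 =
  fixes I :: "('io, 'ia) cat"
    and Xc :: "'io \<Rightarrow> ('o, 'm, 'k::comm_ring_1) kcat"
    and Xf :: "'ia \<Rightarrow> ('o, 'm) func"
    and \<eta> :: "'io \<Rightarrow> 'o \<Rightarrow> 'm"
    and \<theta> :: "'ia \<Rightarrow> 'ia \<Rightarrow> 'o \<Rightarrow> 'm"
    and Yc :: "'io \<Rightarrow> ('o, 'm, 'k) kcat"
    and L R :: "'io \<Rightarrow> ('o, 'm) func"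
    and \<epsilon> \<zeta> :: "'io \<Rightarrow> 'o \<Rightarrow> 'm"
  assumes catI[simp]: "is_category I"
    and X: "is_oplax_functor I Xc Xf \<eta> \<theta>"
    and Yk: "\<forall>i\<in>Ob I. is_kcategory (Yc i)"
    and adj: "\<forall>i\<in>Ob I. is_adjunction (Xc i) (Yc i) (L i) (R i) (\<epsilon> i) (\<zeta> i)"
begin

lemma Xk: "i \<in> Ob I \<Longrightarrow> is_kcategory (Xc i)" using oplaxD(1)[OF X] by (rule bspec)
lemma catX[simp]: "i \<in> Ob I \<Longrightarrow> is_category (Xc i)" by (rule kcat_cat[OF Xk])
lemma catY[simp]: "i \<in> Ob I \<Longrightarrow> is_category (Yc i)" by (rule kcat_cat[OF bspec[OF Yk]])

lemma Xf_kf: "arr I a \<Longrightarrow> is_kfunctor (Xc (arr_dom I a)) (Xc (arr_cod I a)) (Xf a)"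
  using oplaxD(2)[OF X] arr_hom[OF catI] by presburger

lemma Xf_ob[simp]: "arr I a \<Longrightarrow> arr_cod I a = j \<Longrightarrow> x \<in> Ob (Xc (arr_dom I a)) \<Longrightarrow> fo (Xf a) x \<in> Ob (Xc j)"
proof - assume a: "arr I a" and e: "arr_cod I a = j" and x: "x \<in> Ob (Xc (arr_dom I a))"
  show ?thesis using kf_ob[OF Xf_kf[OF a] x] e by simp qed
lemma Xf_arr[simp]: "arr I a \<Longrightarrow> arr_cod I a = j \<Longrightarrow> arr (Xc (arr_dom I a)) f \<Longrightarrow> arr (Xc j) (fm (Xf a) f)"
proof - assume a: "arr I a" and e: "arr_cod I a = j" and f: "arr (Xc (arr_dom I a)) f"
  show ?thesis using kf_arr[OF Xf_kf[OF a] _ _ f] e a cod_ob[OF catI a] by simp qed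
lemma Xf_dom[simp]: "arr I a \<Longrightarrow> arr_cod I a = j \<Longrightarrow> arr (Xc (arr_dom I a)) f \<Longrightarrow>
   arr_dom (Xc j) (fm (Xf a) f) = fo (Xf a) (arr_dom (Xc (arr_dom I a)) f)"
proof - assume a: "arr I a" and e: "arr_cod I a = j" and f: "arr (Xc (arr_dom I a)) f"
  show ?thesis using kf_dom[OF Xf_kf[OF a] _ _ f] e a cod_ob[OF catI a] by simp qed
lemma Xf_cod[simp]: "arr I a \<Longrightarrow> arr_cod I a = j \<Longrightarrow> arr (Xc (arr_dom I a)) f \<Longrightarrow>
   arr_cod (Xc j) (fm (Xf a) f) = fo (Xf a) (arr_cod (Xc (arr_dom I a)) f)"
proof - assume a: "arr I a" and e: "arr_cod I a = j" and f: "arr (Xc (arr_dom I a)) f"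
  show ?thesis using kf_cod[OF Xf_kf[OF a] _ _ f] e a cod_ob[OF catI a] by simp qed
lemma Xf_cmp[simp]: "arr I a \<Longrightarrow> arr_dom I a = i \<Longrightarrow> arr (Xc i) f \<Longrightarrow> arr (Xc i) g \<Longrightarrow>
   arr_cod (Xc i) f = arr_dom (Xc i) g \<Longrightarrow>
   fm (Xf a) (cmp (Xc i) g f) = cmp (Xc (arr_cod I a)) (fm (Xf a) g) (fm (Xf a) f)"
proof - assume a: "arr I a" and e: "arr_dom I a = i" and f: "arr (Xc i) f" "arr (Xc i) g" "arr_cod (Xc i) f = arr_dom (Xc i) g"
  have "i \<in> Ob I" using e a by (metis dom_ob catI)
  then show ?thesis using kf_cmp[OF Xf_kf[OF a] _ f[unfolded e[symmetric]]] e by simp qed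
lemma Xf_id[simp]: "arr I a \<Longrightarrow> arr_dom I a = i \<Longrightarrow> x \<in> Ob (Xc i) \<Longrightarrow>
   fm (Xf a) (idm (Xc i) x) = idm (Xc (arr_cod I a)) (fo (Xf a) x)"
proof - assume a: "arr I a" and e: "arr_dom I a = i" and x: "x \<in> Ob (Xc i)"
  show ?thesis using kf_id[OF Xf_kf[OF a]] x e by simp qed

lemma adji: "i \<in> Ob I \<Longrightarrow> is_adjunction (Xc i) (Yc i) (L i) (R i) (\<epsilon> i) (\<zeta> i)" using adj by (rule bspec)
lemma L_kf: "i \<in> Ob I \<Longrightarrow> is_kfunctor (Xc i) (Yc i) (L i)" using adjD(1)[OF adji] .
lemma R_kf: "i \<in> Ob I \<Longrightarrow> is_kfunctor (Yc i) (Xc i) (R i)" using adjD(2)[OF adji] .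
lemma eps_nt: "i \<in> Ob I \<Longrightarrow> is_nat_trans (Xc i) (Xc i) idF (fcompose (R i) (L i)) (\<epsilon> i)" using adjD(3)[OF adji] .
lemma zeta_nt: "i \<in> Ob I \<Longrightarrow> is_nat_trans (Yc i) (Yc i) (fcompose (L i) (R i)) idF (\<zeta> i)" using adjD(4)[OF adji] .
lemma tri1: "i \<in> Ob I \<Longrightarrow> x \<in> Ob (Xc i) \<Longrightarrow> cmp (Yc i) (\<zeta> i (fo (L i) x)) (fm (L i) (\<epsilon> i x)) = idm (Yc i) (fo (L i) x)"
  using adjD(5)[OF adji] by (rule bspec)
lemma tri2: "i \<in> Ob I \<Longrightarrow> y \<in> Ob (Yc i) \<Longrightarrow> cmp (Xc i) (fm (R i) (\<zeta> i y)) (\<epsilon> i (fo (R i) y)) = idm (Xc i) (fo (R i) y)"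
  using adjD(6)[OF adji] by (rule bspec)

lemma L_ob[simp]: "i \<in> Ob I \<Longrightarrow> x \<in> Ob (Xc i) \<Longrightarrow> fo (L i) x \<in> Ob (Yc i)" by (rule kf_ob[OF L_kf])
lemma L_arr[simp]: "i \<in> Ob I \<Longrightarrow> arr (Xc i) f \<Longrightarrow> arr (Yc i) (fm (L i) f)" by (rule kf_arr[OF L_kf catX catY])
lemma L_dom[simp]: "i \<in> Ob I \<Longrightarrow> arr (Xc i) f \<Longrightarrow> arr_dom (Yc i) (fm (L i) f) = fo (L i) (arr_dom (Xc i) f)" by (rule kf_dom[OF L_kf catX catY])
lemma L_cod[simp]: "i \<in> Ob I \<Longrightarrow> arr (Xc i) f \<Longrightarrow> arr_cod (Yc i) (fm (L i) f) = fo (L i) (arr_cod (Xc i) f)" by (rule kf_cod[OF L_kf catX catY])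
lemma L_cmp[simp]: "i \<in> Ob I \<Longrightarrow> arr (Xc i) f \<Longrightarrow> arr (Xc i) g \<Longrightarrow> arr_cod (Xc i) f = arr_dom (Xc i) g \<Longrightarrow>
   fm (L i) (cmp (Xc i) g f) = cmp (Yc i) (fm (L i) g) (fm (L i) f)" by (rule kf_cmp[OF L_kf catX])
lemma L_id[simp]: "i \<in> Ob I \<Longrightarrow> x \<in> Ob (Xc i) \<Longrightarrow> fm (L i) (idm (Xc i) x) = idm (Yc i) (fo (L i) x)" by (rule kf_id[OF L_kf])

lemma R_ob[simp]: "i \<in> Ob I \<Longrightarrow> x \<in> Ob (Yc i) \<Longrightarrow> fo (R i) x \<in> Ob (Xc i)" by (rule kf_ob[OF R_kf])
lemma R_arr[simp]: "i \<in> Ob I \<Longrightarrow> arr (Yc i) f \<Longrightarrow> arr (Xc i) (fm (R i) f)" by (rule kf_arr[OF R_kf catY catX])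
lemma R_dom[simp]: "i \<in> Ob I \<Longrightarrow> arr (Yc i) f \<Longrightarrow> arr_dom (Xc i) (fm (R i) f) = fo (R i) (arr_dom (Yc i) f)" by (rule kf_dom[OF R_kf catY catX])
lemma R_cod[simp]: "i \<in> Ob I \<Longrightarrow> arr (Yc i) f \<Longrightarrow> arr_cod (Xc i) (fm (R i) f) = fo (R i) (arr_cod (Yc i) f)" by (rule kf_cod[OF R_kf catY catX])
lemma R_cmp[simp]: "i \<in> Ob I \<Longrightarrow> arr (Yc i) f \<Longrightarrow> arr (Yc i) g \<Longrightarrow> arr_cod (Yc i) f = arr_dom (Yc i) g \<Longrightarrow>
   fm (R i) (cmp (Yc i) g f) = cmp (Xc i) (fm (R i) g) (fm (R i) f)" by (rule kf_cmp[OF R_kf catY])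
lemma R_id[simp]: "i \<in> Ob I \<Longrightarrow> x \<in> Ob (Yc i) \<Longrightarrow> fm (R i) (idm (Yc i) x) = idm (Xc i) (fo (R i) x)" by (rule kf_id[OF R_kf])

lemma eps_arr[simp]: "i \<in> Ob I \<Longrightarrow> x \<in> Ob (Xc i) \<Longrightarrow> arr (Xc i) (\<epsilon> i x)" by (rule nt_arr[OF eps_nt catX])
lemma eps_dom[simp]: "i \<in> Ob I \<Longrightarrow> x \<in> Ob (Xc i) \<Longrightarrow> arr_dom (Xc i) (\<epsilon> i x) = x" using nt_dom[OF eps_nt catX] by simp
lemma eps_cod[simp]: "i \<in> Ob I \<Longrightarrow> x \<in> Ob (Xc i) \<Longrightarrow> arr_cod (Xc i) (\<epsilon> i x) = fo (R i) (fo (L i) x)" using nt_cod[OF eps_nt catX] by simp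
lemma zeta_arr[simp]: "i \<in> Ob I \<Longrightarrow> y \<in> Ob (Yc i) \<Longrightarrow> arr (Yc i) (\<zeta> i y)" by (rule nt_arr[OF zeta_nt catY])
lemma zeta_dom[simp]: "i \<in> Ob I \<Longrightarrow> y \<in> Ob (Yc i) \<Longrightarrow> arr_dom (Yc i) (\<zeta> i y) = fo (L i) (fo (R i) y)" using nt_dom[OF zeta_nt catY] by simp
lemma zeta_cod[simp]: "i \<in> Ob I \<Longrightarrow> y \<in> Ob (Yc i) \<Longrightarrow> arr_cod (Yc i) (\<zeta> i y) = y" using nt_cod[OF zeta_nt catY] by simp

lemma eps_nat: "i \<in> Ob I \<Longrightarrow> arr (Xc i) f \<Longrightarrow>
   cmp (Xc i) (fm (R i) (fm (L i) f)) (\<epsilon> i (arr_dom (Xc i) f)) = cmp (Xc i) (\<epsilon> i (arr_cod (Xc i) f)) f"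
  using nt_nat[OF eps_nt catX] by simp
lemma zeta_nat: "i \<in> Ob I \<Longrightarrow> arr (Yc i) f \<Longrightarrow>
   cmp (Yc i) f (\<zeta> i (arr_dom (Yc i) f)) = cmp (Yc i) (\<zeta> i (arr_cod (Yc i) f)) (fm (L i) (fm (R i) f))"
  using nt_nat[OF zeta_nt catY] by simp

lemma eta_nt: "i \<in> Ob I \<Longrightarrow> is_nat_trans (Xc i) (Xc i) (Xf (idm I i)) idF (\<eta> i)"
  using oplaxD(3)[OF X] by (rule bspec)
lemma eta_arr[simp]: "i \<in> Ob I \<Longrightarrow> x \<in> Ob (Xc i) \<Longrightarrow> arr (Xc i) (\<eta> i x)" by (rule nt_arr[OF eta_nt catX])
lemma eta_dom[simp]: "i \<in> Ob I \<Longrightarrow> x \<in> Ob (Xc i) \<Longrightarrow> arr_dom (Xc i) (\<eta> i x) = fo (Xf (idm I i)) x" by (rule nt_dom[OF eta_nt catX])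
lemma eta_cod[simp]: "i \<in> Ob I \<Longrightarrow> x \<in> Ob (Xc i) \<Longrightarrow> arr_cod (Xc i) (\<eta> i x) = x" using nt_cod[OF eta_nt catX] by simp
lemma eta_nat: "i \<in> Ob I \<Longrightarrow> arr (Xc i) f \<Longrightarrow>
   cmp (Xc i) f (\<eta> i (arr_dom (Xc i) f)) = cmp (Xc i) (\<eta> i (arr_cod (Xc i) f)) (fm (Xf (idm I i)) f)"
  using nt_nat[OF eta_nt catX] by simp

lemma theta_nt: "arr I a \<Longrightarrow> arr I b \<Longrightarrow> arr_cod I a = arr_dom I b \<Longrightarrow>
  is_nat_trans (Xc (arr_dom I a)) (Xc (arr_cod I b)) (Xf (cmp I b a)) (fcompose (Xf b) (Xf a)) (\<theta> b a)"
proof - assume a: "arr I a" "arr I b" "arr_cod I a = arr_dom I b"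
  have "a \<in> Hom I (arr_dom I a) (arr_dom I b)" "b \<in> Hom I (arr_dom I b) (arr_cod I b)"
    using arr_hom[OF catI a(1)] arr_hom[OF catI a(2)] a(3) by simp_all
  then show ?thesis using oplaxD(4)[OF X] by blast qed
lemma theta_arr[simp]: "arr I a \<Longrightarrow> arr I b \<Longrightarrow> arr_cod I a = arr_dom I b \<Longrightarrow> arr_cod I b = k \<Longrightarrow>
  x \<in> Ob (Xc (arr_dom I a)) \<Longrightarrow> arr (Xc k) (\<theta> b a x)"
proof - assume a: "arr I a" "arr I b" "arr_cod I a = arr_dom I b" "arr_cod I b = k" and x: "x \<in> Ob (Xc (arr_dom I a))"
  show ?thesis using nt_arr[OF theta_nt[OF a(1-3)] _ x] a cod_ob[OF catI a(2)] by simp qed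
lemma theta_dom[simp]: "arr I a \<Longrightarrow> arr I b \<Longrightarrow> arr_cod I a = arr_dom I b \<Longrightarrow> arr_cod I b = k \<Longrightarrow>
  x \<in> Ob (Xc (arr_dom I a)) \<Longrightarrow> arr_dom (Xc k) (\<theta> b a x) = fo (Xf (cmp I b a)) x"
proof - assume a: "arr I a" "arr I b" "arr_cod I a = arr_dom I b" "arr_cod I b = k" and x: "x \<in> Ob (Xc (arr_dom I a))"
  show ?thesis using nt_dom[OF theta_nt[OF a(1-3)] _ x] a cod_ob[OF catI a(2)] by simp qed
lemma theta_cod[simp]: "arr I a \<Longrightarrow> arr I b \<Longrightarrow> arr_cod I a = arr_dom I b \<Longrightarrow> arr_cod I b = k \<Longrightarrow>
  x \<in> Ob (Xc (arr_dom I a)) \<Longrightarrow> arr_cod (Xc k) (\<theta> b a x) = fo (Xf b) (fo (Xf a) x)"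
proof - assume a: "arr I a" "arr I b" "arr_cod I a = arr_dom I b" "arr_cod I b = k" and x: "x \<in> Ob (Xc (arr_dom I a))"
  show ?thesis using nt_cod[OF theta_nt[OF a(1-3)] _ x] a cod_ob[OF catI a(2)] by simp qed
lemma theta_nat: "arr I a \<Longrightarrow> arr I b \<Longrightarrow> arr_cod I a = arr_dom I b \<Longrightarrow> arr (Xc (arr_dom I a)) f \<Longrightarrow>
   cmp (Xc (arr_cod I b)) (fm (Xf b) (fm (Xf a) f)) (\<theta> b a (arr_dom (Xc (arr_dom I a)) f))
   = cmp (Xc (arr_cod I b)) (\<theta> b a (arr_cod (Xc (arr_dom I a)) f)) (fm (Xf (cmp I b a)) f)"
proof - assume a: "arr I a" "arr I b" "arr_cod I a = arr_dom I b" and f: "arr (Xc (arr_dom I a)) f"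
  show ?thesis using nt_nat[OF theta_nt[OF a(1-3)] _ f] a by simp qed

lemma unitX1: "arr I a \<Longrightarrow> arr_dom I a = i \<Longrightarrow> x \<in> Ob (Xc i) \<Longrightarrow>
  cmp (Xc (arr_cod I a)) (fm (Xf a) (\<eta> i x)) (\<theta> a (idm I i) x) = idm (Xc (arr_cod I a)) (fo (Xf a) x)"
proof - assume a: "arr I a" "arr_dom I a = i" and x: "x \<in> Ob (Xc i)"
  have "a \<in> Hom I i (arr_cod I a)" using arr_hom[OF catI a(1)] a by simp
  then show ?thesis using oplaxD(5)[OF X] x by blast qed
lemma unitX2: "arr I a \<Longrightarrow> arr_cod I a = j \<Longrightarrow> x \<in> Ob (Xc (arr_dom I a)) \<Longrightarrow>
  cmp (Xc j) (\<eta> j (fo (Xf a) x)) (\<theta> (idm I j) a x) = idm (Xc j) (fo (Xf a) x)"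
proof - assume a: "arr I a" "arr_cod I a = j" and x: "x \<in> Ob (Xc (arr_dom I a))"
  have "a \<in> Hom I (arr_dom I a) j" using arr_hom[OF catI a(1)] a by simp
  then show ?thesis using oplaxD(5)[OF X] x by blast qed
lemma assocX: "arr I a \<Longrightarrow> arr I b \<Longrightarrow> arr I c \<Longrightarrow> arr_cod I a = arr_dom I b \<Longrightarrow> arr_cod I b = arr_dom I c \<Longrightarrow>
   x \<in> Ob (Xc (arr_dom I a)) \<Longrightarrow>
   cmp (Xc (arr_cod I c)) (fm (Xf c) (\<theta> b a x)) (\<theta> c (cmp I b a) x)
          = cmp (Xc (arr_cod I c)) (\<theta> c b (fo (Xf a) x)) (\<theta> (cmp I c b) a x)"
proof - assume a: "arr I a" "arr I b" "arr I c" "arr_cod I a = arr_dom I b" "arr_cod I b = arr_dom I c" and x: "x \<in> Ob (Xc (arr_dom I a))"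
  have "a \<in> Hom I (arr_dom I a) (arr_dom I b)" "b \<in> Hom I (arr_dom I b) (arr_dom I c)" "c \<in> Hom I (arr_dom I c) (arr_cod I c)"
    using arr_hom[OF catI a(1)] arr_hom[OF catI a(2)] arr_hom[OF catI a(3)] a by simp_all
  then show ?thesis using oplaxD(6)[OF X] x by blast qed


abbreviation Yf where "Yf a \<equiv> fcompose (L (arr_cod I a)) (fcompose (Xf a) (R (arr_dom I a)))"
abbreviation eta' where "eta' i y \<equiv> cmp (Yc i) (\<zeta> i y) (fm (L i) (\<eta> i (fo (R i) y)))"
abbreviation theta' where "theta' b a y \<equiv>
           cmp (Yc (arr_cod I b))
             (fm (L (arr_cod I b)) (fm (Xf b) (\<epsilon> (arr_cod I a) (fo (Xf a) (fo (R (arr_dom I a)) y)))))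
             (fm (L (arr_cod I b)) (\<theta> b a (fo (R (arr_dom I a)) y)))"
abbreviation phiR where "phiR a y \<equiv> \<epsilon> (arr_cod I a) (fo (Xf a) (fo (R (arr_dom I a)) y))"

lemma homE: assumes "a \<in> Hom I i j" shows "arr I a" "arr_dom I a = i" "arr_cod I a = j" "i \<in> Ob I" "j \<in> Ob I"
  using assms hom_iff[OF catI] C_ob[OF catI] by blast+

lemma Yf_kf: assumes "a \<in> Hom I i j" shows "is_kfunctor (Yc i) (Yc j) (Yf a)"
proof -
  note h = homE[OF assms]
  have "is_kfunctor (Xc i) (Xc j) (Xf a)" using Xf_kf[OF h(1)] h by simp
  from kf_compose[OF kf_compose[OF R_kf[OF h(4)] this] L_kf[OF h(5)]] show ?thesis using h
    by (simp add: fcompose_def)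
qed

lemma eta'_nt: assumes i: "i \<in> Ob I" shows "is_nat_trans (Yc i) (Yc i) (Yf (idm I i)) idF (eta' i)"
  unfolding is_nat_trans_def
proof (intro conjI ballI allI impI)
  fix y assume y: "y \<in> Ob (Yc i)"
  show "eta' i y \<in> Hom (Yc i) (fo (Yf (idm I i)) y) (fo idF y)"
    using i y by (simp add: hom_iff)
next
  fix y y' g assume g0: "g \<in> Hom (Yc i) y y'"
  have g: "arr (Yc i) g" "arr_dom (Yc i) g = y" "arr_cod (Yc i) g = y'" using g0 i by (simp_all add: hom_iff)
  have y: "y \<in> Ob (Yc i)" "y' \<in> Ob (Yc i)" using g i dom_ob cod_ob catY by metis+
  have Z: "cmp (Yc i) g (\<zeta> i y) = cmp (Yc i) (\<zeta> i y') (fm (L i) (fm (R i) g))"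
    using zeta_nat[OF i g(1)] g by simp
  have E: "cmp (Yc i) (fm (L i) (fm (R i) g)) (fm (L i) (\<eta> i (fo (R i) y))) =
     cmp (Yc i) (fm (L i) (\<eta> i (fo (R i) y'))) (fm (L i) (fm (Xf (idm I i)) (fm (R i) g)))"
    using arg_cong[OF eta_nat[OF i R_arr[OF i g(1)]], of "fm (L i)"] i g y by simp
  show "cmp (Yc i) (fm idF g) (eta' i y) = cmp (Yc i) (eta' i y') (fm (Yf (idm I i)) g)"
    using i g y by (simp add: tail_rule[OF catY[OF i] Z] E)
qed

lemma theta'_nt: assumes a0: "a \<in> Hom I i j" and b0: "b \<in> Hom I j k"
  shows "is_nat_trans (Yc i) (Yc k) (Yf (cmp I b a)) (fcompose (Yf b) (Yf a)) (theta' b a)"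
  unfolding is_nat_trans_def
proof (intro conjI ballI allI impI)
  note a = homE[OF a0] and b = homE[OF b0]
  fix y assume y: "y \<in> Ob (Yc i)"
  show "theta' b a y \<in> Hom (Yc k) (fo (Yf (cmp I b a)) y) (fo (fcompose (Yf b) (Yf a)) y)"
    using a b y by (simp add: hom_iff)
next
  note a = homE[OF a0] and b = homE[OF b0]
  fix y y' g assume g0: "g \<in> Hom (Yc i) y y'"
  have g: "arr (Yc i) g" "arr_dom (Yc i) g = y" "arr_cod (Yc i) g = y'" using g0 a by (simp_all add: hom_iff)
  have y: "y \<in> Ob (Yc i)" "y' \<in> Ob (Yc i)" using g a dom_ob cod_ob catY by metis+
  have f1: "arr (Xc j) (fm (Xf a) (fm (R i) g))" using a g by simp
  have E1: "cmp (Yc k) (fm (L k) (fm (Xf b) (fm (R j) (fm (L j) (fm (Xf a) (fm (R i) g))))))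
      (fm (L k) (fm (Xf b) (\<epsilon> j (fo (Xf a) (fo (R i) y)))))
    = cmp (Yc k) (fm (L k) (fm (Xf b) (\<epsilon> j (fo (Xf a) (fo (R i) y')))))
      (fm (L k) (fm (Xf b) (fm (Xf a) (fm (R i) g))))"
    using arg_cong[OF eps_nat[OF a(5) f1], of "\<lambda>z. fm (L k) (fm (Xf b) z)"] a b g y by simp
  have E2: "cmp (Yc k) (fm (L k) (fm (Xf b) (fm (Xf a) (fm (R i) g)))) (fm (L k) (\<theta> b a (fo (R i) y)))
     = cmp (Yc k) (fm (L k) (\<theta> b a (fo (R i) y'))) (fm (L k) (fm (Xf (cmp I b a)) (fm (R i) g)))"
    using arg_cong[OF theta_nat[OF a(1) b(1) _ , of "fm (R i) g"], of "fm (L k)"] a b g y by simp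
  show "cmp (Yc k) (fm (fcompose (Yf b) (Yf a)) g) (theta' b a y) = cmp (Yc k) (theta' b a y') (fm (Yf (cmp I b a)) g)"
    using a b g y by (simp add: tail_rule[OF catY[OF b(5)] E1] E2)
qed

lemma Y_unit1: assumes a0: "a \<in> Hom I i j" and y: "y \<in> Ob (Yc i)"
  shows "cmp (Yc j) (fm (Yf a) (eta' i y)) (theta' a (idm I i) y) = idm (Yc j) (fo (Yf a) y)"
proof -
  note a = homE[OF a0]
  have N1: "cmp (Yc j) (fm (L j) (fm (Xf a) (fm (R i) (fm (L i) (\<eta> i (fo (R i) y))))))
        (fm (L j) (fm (Xf a) (\<epsilon> i (fo (Xf (idm I i)) (fo (R i) y)))))
     = cmp (Yc j) (fm (L j) (fm (Xf a) (\<epsilon> i (fo (R i) y)))) (fm (L j) (fm (Xf a) (\<eta> i (fo (R i) y))))"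
    using arg_cong[OF eps_nat[OF a(4) eta_arr[OF a(4) R_ob[OF a(4) y]]], of "\<lambda>z. fm (L j) (fm (Xf a) z)"] a y by simp
  have N2: "cmp (Yc j) (fm (L j) (fm (Xf a) (fm (R i) (\<zeta> i y)))) (fm (L j) (fm (Xf a) (\<epsilon> i (fo (R i) y))))
     = idm (Yc j) (fo (L j) (fo (Xf a) (fo (R i) y)))"
  proof -
    have "fm (L j) (fm (Xf a) (cmp (Xc i) (fm (R i) (\<zeta> i y)) (\<epsilon> i (fo (R i) y))))
      = fm (L j) (fm (Xf a) (idm (Xc i) (fo (R i) y)))" using tri2[OF a(4) y] by simp
    with a y show ?thesis by simp
  qed
  have N3: "cmp (Yc j) (fm (L j) (fm (Xf a) (\<eta> i (fo (R i) y)))) (fm (L j) (\<theta> a (idm I i) (fo (R i) y)))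
     = idm (Yc j) (fo (L j) (fo (Xf a) (fo (R i) y)))"
    using arg_cong[OF unitX1[OF a(1) a(2), of "fo (R i) y"], of "fm (L j)"] a y by simp
  show ?thesis using a y
    by (simp add: tail_rule[OF catY[OF a(5)] N1] tail_id_rule[OF catY[OF a(5)] N2] N2 N3)
qed

lemma Y_unit2: assumes a0: "a \<in> Hom I i j" and y: "y \<in> Ob (Yc i)"
  shows "cmp (Yc j) (eta' j (fo (Yf a) y)) (theta' (idm I j) a y) = idm (Yc j) (fo (Yf a) y)"
proof -
  note a = homE[OF a0]
  have z: "fo (Xf a) (fo (R i) y) \<in> Ob (Xc j)" using a y by simp
  have M1: "cmp (Yc j) (fm (L j) (\<eta> j (fo (R j) (fo (L j) (fo (Xf a) (fo (R i) y)))))) (fm (L j) (fm (Xf (idm I j)) (\<epsilon> j (fo (Xf a) (fo (R i) y)))))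
     = cmp (Yc j) (fm (L j) (\<epsilon> j (fo (Xf a) (fo (R i) y)))) (fm (L j) (\<eta> j (fo (Xf a) (fo (R i) y))))"
    using arg_cong[OF eta_nat[OF a(5) eps_arr[OF a(5) z]], of "fm (L j)"] a z by simp
  have M2: "cmp (Yc j) (\<zeta> j (fo (L j) (fo (Xf a) (fo (R i) y)))) (fm (L j) (\<epsilon> j (fo (Xf a) (fo (R i) y)))) = idm (Yc j) (fo (L j) (fo (Xf a) (fo (R i) y)))"
    by (rule tri1[OF a(5) z])
  have M3: "cmp (Yc j) (fm (L j) (\<eta> j (fo (Xf a) (fo (R i) y)))) (fm (L j) (\<theta> (idm I j) a (fo (R i) y))) = idm (Yc j) (fo (L j) (fo (Xf a) (fo (R i) y)))"
    using a y arg_cong[OF unitX2[OF a(1) a(3), of "fo (R i) y"], of "fm (L j)"] by simp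
  show ?thesis using a y z
    by (simp add: tail_rule[OF catY[OF a(5)] M1] tail_id_rule[OF catY[OF a(5)] M2] M2 M3)
qed


lemma Y_assoc: assumes a0: "a \<in> Hom I i j" and b0: "b \<in> Hom I j k" and c0: "c \<in> Hom I k l" and y: "y \<in> Ob (Yc i)"
  shows "cmp (Yc l) (fm (Yf c) (theta' b a y)) (theta' c (cmp I b a) y)
       = cmp (Yc l) (theta' c b (fo (Yf a) y)) (theta' (cmp I c b) a y)"
proof -
  note a = homE[OF a0] and b = homE[OF b0] and c = homE[OF c0]
  have x: "fo (R i) y \<in> Ob (Xc i)" using a y by simp
  have t1: "arr (Xc k) (\<theta> b a (fo (R i) y))" using a b x by simp
  have t2: "arr (Xc k) (fm (Xf b) (\<epsilon> j (fo (Xf a) (fo (R i) y))))" using a b x by simp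
  have t3: "arr (Xc j) (\<epsilon> j (fo (Xf a) (fo (R i) y)))" using a b x by simp
  have Q1: "cmp (Yc l) (fm (L l) (fm (Xf c) (fm (R k) (fm (L k) (\<theta> b a (fo (R i) y)))))) (fm (L l) (fm (Xf c) (\<epsilon> k (fo (Xf (cmp I b a)) (fo (R i) y))))) = cmp (Yc l) (fm (L l) (fm (Xf c) (\<epsilon> k (fo (Xf b) (fo (Xf a) (fo (R i) y)))))) (fm (L l) (fm (Xf c) (\<theta> b a (fo (R i) y))))"
    using a b c x arg_cong[OF eps_nat[OF b(5) t1], of "\<lambda>z. fm (L l) (fm (Xf c) z)"] by simp
  have Q2: "cmp (Yc l) (fm (L l) (fm (Xf c) (fm (R k) (fm (L k) (fm (Xf b) (\<epsilon> j (fo (Xf a) (fo (R i) y)))))))) (fm (L l) (fm (Xf c) (\<epsilon> k (fo (Xf b) (fo (Xf a) (fo (R i) y)))))) = cmp (Yc l) (fm (L l) (fm (Xf c) (\<epsilon> k (fo (Xf b) (fo (R j) (fo (L j) (fo (Xf a) (fo (R i) y)))))))) (fm (L l) (fm (Xf c) (fm (Xf b) (\<epsilon> j (fo (Xf a) (fo (R i) y))))))"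
    using a b c x arg_cong[OF eps_nat[OF b(5) t2], of "\<lambda>z. fm (L l) (fm (Xf c) z)"] by simp
  have Q3: "cmp (Yc l) (fm (L l) (\<theta> c b (fo (R j) (fo (L j) (fo (Xf a) (fo (R i) y)))))) (fm (L l) (fm (Xf (cmp I c b)) (\<epsilon> j (fo (Xf a) (fo (R i) y))))) = cmp (Yc l) (fm (L l) (fm (Xf c) (fm (Xf b) (\<epsilon> j (fo (Xf a) (fo (R i) y)))))) (fm (L l) (\<theta> c b (fo (Xf a) (fo (R i) y))))"
    using a b c x arg_cong[OF theta_nat[OF b(1) c(1) _, of "\<epsilon> j (fo (Xf a) (fo (R i) y))"], of "fm (L l)"] t3
    by (simp del: L_cmp add: L_cmp[symmetric])
  have Q4: "cmp (Yc l) (fm (L l) (\<theta> c b (fo (Xf a) (fo (R i) y)))) (fm (L l) (\<theta> (cmp I c b) a (fo (R i) y))) = cmp (Yc l) (fm (L l) (fm (Xf c) (\<theta> b a (fo (R i) y)))) (fm (L l) (\<theta> c (cmp I b a) (fo (R i) y)))"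
    using a b c x arg_cong[OF assocX[OF a(1) b(1) c(1) _ _, of "fo (R i) y"], of "fm (L l)"] by simp
  show ?thesis using a b c y x
    by (simp add: tail_rule[OF catY[OF c(5)] Q1] tail_rule[OF catY[OF c(5)] Q2] tail_rule[OF catY[OF c(5)] Q3] Q4)
qed

lemma R_nt: assumes a0: "a \<in> Hom I i j"
  shows "is_nat_trans (Yc i) (Xc j) (fcompose (Xf a) (R i)) (fcompose (R j) (Yf a)) (phiR a)"
  unfolding is_nat_trans_def
proof (intro conjI ballI allI impI)
  note a = homE[OF a0]
  fix y assume y: "y \<in> Ob (Yc i)"
  show "phiR a y \<in> Hom (Xc j) (fo (fcompose (Xf a) (R i)) y) (fo (fcompose (R j) (Yf a)) y)"
    using a y by (simp add: hom_iff)
next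
  note a = homE[OF a0]
  fix y y' g assume g0: "g \<in> Hom (Yc i) y y'"
  have g: "arr (Yc i) g" "arr_dom (Yc i) g = y" "arr_cod (Yc i) g = y'" using g0 a by (simp_all add: hom_iff)
  have f1: "arr (Xc j) (fm (Xf a) (fm (R i) g))" using a g by simp
  show "cmp (Xc j) (fm (fcompose (R j) (Yf a)) g) (phiR a y) = cmp (Xc j) (phiR a y') (fm (fcompose (Xf a) (R i)) g)"
    using a g eps_nat[OF a(5) f1] by simp
qed

lemma R_unit: assumes i: "i \<in> Ob I" and y: "y \<in> Ob (Yc i)"
  shows "cmp (Xc i) (fm (R i) (eta' i y)) (phiR (idm I i) y) = \<eta> i (fo (R i) y)"
proof -
  have x: "fo (R i) y \<in> Ob (Xc i)" using i y by simp
  have U1: "cmp (Xc i) (fm (R i) (fm (L i) (\<eta> i (fo (R i) y)))) (\<epsilon> i (fo (Xf (idm I i)) (fo (R i) y)))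
     = cmp (Xc i) (\<epsilon> i (fo (R i) y)) (\<eta> i (fo (R i) y))"
    using i x eps_nat[OF i eta_arr[OF i x]] by simp
  show ?thesis using i y x
    by (simp add: U1 tail_id_rule[OF catX[OF i] tri2[OF i y]])
qed

lemma R_comp: assumes a0: "a \<in> Hom I i j" and b0: "b \<in> Hom I j k" and y: "y \<in> Ob (Yc i)"
  shows "cmp (Xc k) (fm (R k) (theta' b a y)) (phiR (cmp I b a) y)
        = cmp (Xc k) (phiR b (fo (Yf a) y))
            (cmp (Xc k) (fm (Xf b) (phiR a y)) (\<theta> b a (fo (R i) y)))"
proof -
  note a = homE[OF a0] and b = homE[OF b0]
  have x: "fo (R i) y \<in> Ob (Xc i)" using a y by simp
  have t1: "arr (Xc k) (\<theta> b a (fo (R i) y))" using a b x by simp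
  have t2: "arr (Xc k) (fm (Xf b) (\<epsilon> j (fo (Xf a) (fo (R i) y))))" using a b x by simp
  have V1: "cmp (Xc k) (fm (R k) (fm (L k) (\<theta> b a (fo (R i) y)))) (\<epsilon> k (fo (Xf (cmp I b a)) (fo (R i) y))) = cmp (Xc k) (\<epsilon> k (fo (Xf b) (fo (Xf a) (fo (R i) y)))) (\<theta> b a (fo (R i) y))"
    using a b x eps_nat[OF b(5) t1] by simp
  have V2: "cmp (Xc k) (fm (R k) (fm (L k) (fm (Xf b) (\<epsilon> j (fo (Xf a) (fo (R i) y)))))) (\<epsilon> k (fo (Xf b) (fo (Xf a) (fo (R i) y)))) = cmp (Xc k) (\<epsilon> k (fo (Xf b) (fo (R j) (fo (L j) (fo (Xf a) (fo (R i) y)))))) (fm (Xf b) (\<epsilon> j (fo (Xf a) (fo (R i) y))))"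
    using a b x eps_nat[OF b(5) t2] by simp
  show ?thesis using a b y x
    by (simp add: tail_rule[OF catX[OF b(5)] V2] V1)
qed


lemma R_iso: assumes iso: "\<forall>i\<in>Ob I. is_nat_iso (Xc i) (Xc i) idF (fcompose (R i) (L i)) (\<epsilon> i)"
  and a0: "a \<in> Hom I i j"
  shows "is_nat_iso (Yc i) (Xc j) (fcompose (Xf a) (R i)) (fcompose (R j) (Yf a)) (phiR a)"
proof -
  note a = homE[OF a0]
  obtain \<beta> where bnt: "is_nat_trans (Xc j) (Xc j) (fcompose (R j) (L j)) idF \<beta>"
    and binv: "\<forall>x\<in>Ob (Xc j). cmp (Xc j) (\<beta> x) (\<epsilon> j x) = idm (Xc j) (fo (idF::('o,'m) func) x) \<and>
        cmp (Xc j) (\<epsilon> j x) (\<beta> x) = idm (Xc j) (fo (fcompose (R j) (L j)) x)"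
  proof -
    have "\<exists>\<beta>. is_nat_trans (Xc j) (Xc j) (fcompose (R j) (L j)) idF \<beta> \<and>
       (\<forall>x\<in>Ob (Xc j). cmp (Xc j) (\<beta> x) (\<epsilon> j x) = idm (Xc j) (fo (idF::('o,'m) func) x) \<and>
        cmp (Xc j) (\<epsilon> j x) (\<beta> x) = idm (Xc j) (fo (fcompose (R j) (L j)) x))"
      using bspec[OF iso a(5)] unfolding is_nat_iso_def by (rule conjunct2)
    then show ?thesis using that by blast
  qed
  have nt: "is_nat_trans (Yc i) (Xc j) (fcompose (R j) (Yf a)) (fcompose (Xf a) (R i)) (\<lambda>y. \<beta> (fo (Xf a) (fo (R i) y)))"
    unfolding is_nat_trans_def
  proof (intro conjI ballI allI impI)
    fix y assume y: "y \<in> Ob (Yc i)"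
    have "fo (Xf a) (fo (R i) y) \<in> Ob (Xc j)" using a y by simp
    from nt_hom[OF bnt this] show "\<beta> (fo (Xf a) (fo (R i) y)) \<in> Hom (Xc j) (fo (fcompose (R j) (Yf a)) y) (fo (fcompose (Xf a) (R i)) y)"
      using a by simp
  next
    fix y y' g assume g0: "g \<in> Hom (Yc i) y y'"
    have g: "arr (Yc i) g" "arr_dom (Yc i) g = y" "arr_cod (Yc i) g = y'" using g0 a by (simp_all add: hom_iff)
    have f: "fm (Xf a) (fm (R i) g) \<in> Hom (Xc j) (fo (Xf a) (fo (R i) y)) (fo (Xf a) (fo (R i) y'))"
      using a g by (simp add: hom_iff)
    show "cmp (Xc j) (fm (fcompose (Xf a) (R i)) g) (\<beta> (fo (Xf a) (fo (R i) y))) =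
          cmp (Xc j) (\<beta> (fo (Xf a) (fo (R i) y'))) (fm (fcompose (R j) (Yf a)) g)"
      using a nt_nat0[OF bnt f] by simp
  qed
  show ?thesis unfolding is_nat_iso_def
  proof (intro conjI exI)
    show "is_nat_trans (Yc i) (Xc j) (fcompose (Xf a) (R i)) (fcompose (R j) (Yf a)) (phiR a)" by (rule R_nt[OF a0])
    show "is_nat_trans (Yc i) (Xc j) (fcompose (R j) (Yf a)) (fcompose (Xf a) (R i)) (\<lambda>y. \<beta> (fo (Xf a) (fo (R i) y)))"
      by (rule nt)
    show "\<forall>y\<in>Ob (Yc i). cmp (Xc j) (\<beta> (fo (Xf a) (fo (R i) y))) (phiR a y) = idm (Xc j) (fo (fcompose (Xf a) (R i)) y) \<and>
        cmp (Xc j) (phiR a y) (\<beta> (fo (Xf a) (fo (R i) y))) = idm (Xc j) (fo (fcompose (R j) (Yf a)) y)"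
    proof
      fix y assume y: "y \<in> Ob (Yc i)"
      have "fo (Xf a) (fo (R i) y) \<in> Ob (Xc j)" using a y by simp
      then show "cmp (Xc j) (\<beta> (fo (Xf a) (fo (R i) y))) (phiR a y) = idm (Xc j) (fo (fcompose (Xf a) (R i)) y) \<and>
        cmp (Xc j) (phiR a y) (\<beta> (fo (Xf a) (fo (R i) y))) = idm (Xc j) (fo (fcompose (R j) (Yf a)) y)"
        using binv a by simp
    qed
  qed
qed

end

locale L48i = L48 +
  fixes \<epsilon>inv
  assumes Hinv: "\<forall>i\<in>Ob I. is_nat_trans (Xc i) (Xc i) (fcompose (R i) (L i)) idF (\<epsilon>inv i) \<and>
                    (\<forall>x\<in>Ob (Xc i). cmp (Xc i) (\<epsilon>inv i x) (\<epsilon> i x) = idm (Xc i) x \<and>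
                       cmp (Xc i) (\<epsilon> i x) (\<epsilon>inv i x) = idm (Xc i) (fo (R i) (fo (L i) x)))"
begin

lemma ei_nt: "i \<in> Ob I \<Longrightarrow> is_nat_trans (Xc i) (Xc i) (fcompose (R i) (L i)) idF (\<epsilon>inv i)"
  using Hinv by blast
lemma ei_inv1: "i \<in> Ob I \<Longrightarrow> x \<in> Ob (Xc i) \<Longrightarrow> cmp (Xc i) (\<epsilon>inv i x) (\<epsilon> i x) = idm (Xc i) x"
  using Hinv by blast
lemma ei_inv2: "i \<in> Ob I \<Longrightarrow> x \<in> Ob (Xc i) \<Longrightarrow> cmp (Xc i) (\<epsilon> i x) (\<epsilon>inv i x) = idm (Xc i) (fo (R i) (fo (L i) x))"
  using Hinv by blast
lemma ei_arr[simp]: "i \<in> Ob I \<Longrightarrow> x \<in> Ob (Xc i) \<Longrightarrow> arr (Xc i) (\<epsilon>inv i x)" by (rule nt_arr[OF ei_nt catX])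
lemma ei_dom[simp]: "i \<in> Ob I \<Longrightarrow> x \<in> Ob (Xc i) \<Longrightarrow> arr_dom (Xc i) (\<epsilon>inv i x) = fo (R i) (fo (L i) x)" using nt_dom[OF ei_nt catX] by simp
lemma ei_cod[simp]: "i \<in> Ob I \<Longrightarrow> x \<in> Ob (Xc i) \<Longrightarrow> arr_cod (Xc i) (\<epsilon>inv i x) = x" using nt_cod[OF ei_nt catX] by simp
lemma ei_nat: "i \<in> Ob I \<Longrightarrow> arr (Xc i) f \<Longrightarrow>
   cmp (Xc i) f (\<epsilon>inv i (arr_dom (Xc i) f)) = cmp (Xc i) (\<epsilon>inv i (arr_cod (Xc i) f)) (fm (R i) (fm (L i) f))"
  using nt_nat[OF ei_nt catX] by simp

lemma Linv: assumes i: "i \<in> Ob I" and x: "x \<in> Ob (Xc i)" shows "fm (L i) (\<epsilon>inv i x) = \<zeta> i (fo (L i) x)"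
proof -
  have P: "cmp (Yc i) (fm (L i) (\<epsilon> i x)) (fm (L i) (\<epsilon>inv i x)) = idm (Yc i) (fo (L i) (fo (R i) (fo (L i) x)))"
    using i x arg_cong[OF ei_inv2[OF i x], of "fm (L i)"] by simp
  have "\<zeta> i (fo (L i) x) = cmp (Yc i) (\<zeta> i (fo (L i) x)) (idm (Yc i) (fo (L i) (fo (R i) (fo (L i) x))))"
    using i x by simp
  also have "\<dots> = cmp (Yc i) (\<zeta> i (fo (L i) x)) (cmp (Yc i) (fm (L i) (\<epsilon> i x)) (fm (L i) (\<epsilon>inv i x)))"
    using P by simp
  also have "\<dots> = fm (L i) (\<epsilon>inv i x)"
    using i x by (simp add: tail_id_rule[OF catY[OF i] tri1[OF i x]])
  finally show ?thesis by simp
qed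

abbreviation phiL where "phiL a x \<equiv> fm (L (arr_cod I a)) (fm (Xf a) (\<epsilon>inv (arr_dom I a) x))"

lemma L_nt: assumes a0: "a \<in> Hom I i j"
  shows "is_nat_trans (Xc i) (Yc j) (fcompose (Yf a) (L i)) (fcompose (L j) (Xf a)) (phiL a)"
  unfolding is_nat_trans_def
proof (intro conjI ballI allI impI)
  note a = homE[OF a0]
  fix x assume x: "x \<in> Ob (Xc i)"
  show "phiL a x \<in> Hom (Yc j) (fo (fcompose (Yf a) (L i)) x) (fo (fcompose (L j) (Xf a)) x)"
    using a x by (simp add: hom_iff)
next
  note a = homE[OF a0]
  fix x x' f assume f0: "f \<in> Hom (Xc i) x x'"
  have f: "arr (Xc i) f" "arr_dom (Xc i) f = x" "arr_cod (Xc i) f = x'" using f0 a by (simp_all add: hom_iff)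
  have xx: "x \<in> Ob (Xc i)" "x' \<in> Ob (Xc i)" using f a dom_ob cod_ob catX by metis+
  show "cmp (Yc j) (fm (fcompose (L j) (Xf a)) f) (phiL a x) = cmp (Yc j) (phiL a x') (fm (fcompose (Yf a) (L i)) f)"
    using a f xx arg_cong[OF ei_nat[OF a(4) f(1)], of "\<lambda>z. fm (L j) (fm (Xf a) z)"] by simp
qed

lemma L_unit: assumes i: "i \<in> Ob I" and x: "x \<in> Ob (Xc i)"
  shows "cmp (Yc i) (fm (L i) (\<eta> i x)) (phiL (idm I i) x) = eta' i (fo (L i) x)"
proof -
  have G0: "cmp (Yc i) (fm (L i) (\<eta> i x)) (fm (L i) (fm (Xf (idm I i)) (\<epsilon>inv i x)))
     = cmp (Yc i) (fm (L i) (\<epsilon>inv i x)) (fm (L i) (\<eta> i (fo (R i) (fo (L i) x))))"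
    using i x arg_cong[OF eta_nat[OF i ei_arr[OF i x]], of "fm (L i)"] by simp
  have G: "cmp (Yc i) (fm (L i) (\<eta> i x)) (fm (L i) (fm (Xf (idm I i)) (\<epsilon>inv i x)))
     = cmp (Yc i) (\<zeta> i (fo (L i) x)) (fm (L i) (\<eta> i (fo (R i) (fo (L i) x))))"
    using G0 Linv[OF i x] by simp
  show ?thesis using i x G by simp
qed


lemma L_comp: assumes a0: "a \<in> Hom I i j" and b0: "b \<in> Hom I j k" and x: "x \<in> Ob (Xc i)"
  shows "cmp (Yc k) (fm (L k) (\<theta> b a x)) (phiL (cmp I b a) x)
        = cmp (Yc k) (phiL b (fo (Xf a) x))
            (cmp (Yc k) (fm (Yf b) (phiL a x)) (theta' b a (fo (L i) x)))"
proof -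
  note a = homE[OF a0] and b = homE[OF b0]
  have f1: "arr (Xc j) (fm (Xf a) (\<epsilon>inv i x))" using a x by simp
  have z: "(fo (Xf a) (fo (R i) (fo (L i) x))) \<in> Ob (Xc j)" using a x by simp
  have K1: "cmp (Yc k) (fm (L k) (\<theta> b a x)) (fm (L k) (fm (Xf (cmp I b a)) (\<epsilon>inv i x))) = cmp (Yc k) (fm (L k) (fm (Xf b) (fm (Xf a) (\<epsilon>inv i x)))) (fm (L k) (\<theta> b a (fo (R i) (fo (L i) x))))"
    using a b x arg_cong[OF theta_nat[OF a(1) b(1) _, of "\<epsilon>inv i x"], of "fm (L k)"]
    by (simp del: L_cmp add: L_cmp[symmetric])
  have K2: "cmp (Yc k) (fm (L k) (fm (Xf b) (\<epsilon>inv j (fo (Xf a) x)))) (fm (L k) (fm (Xf b) (fm (R j) (fm (L j) (fm (Xf a) (\<epsilon>inv i x)))))) = cmp (Yc k) (fm (L k) (fm (Xf b) (fm (Xf a) (\<epsilon>inv i x)))) (fm (L k) (fm (Xf b) (\<epsilon>inv j (fo (Xf a) (fo (R i) (fo (L i) x))))))"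
    using a b x arg_cong[OF ei_nat[OF a(5) f1], of "\<lambda>z. fm (L k) (fm (Xf b) z)"] by simp
  have K3: "cmp (Yc k) (fm (L k) (fm (Xf b) (\<epsilon>inv j (fo (Xf a) (fo (R i) (fo (L i) x)))))) (fm (L k) (fm (Xf b) (\<epsilon> j (fo (Xf a) (fo (R i) (fo (L i) x)))))) = idm (Yc k) (fo (L k) (fo (Xf b) (fo (Xf a) (fo (R i) (fo (L i) x)))))"
  proof -
    have "fm (L k) (fm (Xf b) (cmp (Xc j) (\<epsilon>inv j (fo (Xf a) (fo (R i) (fo (L i) x)))) (\<epsilon> j (fo (Xf a) (fo (R i) (fo (L i) x))))))
        = fm (L k) (fm (Xf b) (idm (Xc j) (fo (Xf a) (fo (R i) (fo (L i) x)))))" using ei_inv1[OF a(5) z] by simp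
    with a b x z show ?thesis by simp
  qed
  show ?thesis using a b x z
    by (simp add: K1 tail_rule[OF catY[OF b(5)] K2] tail_id_rule[OF catY[OF b(5)] K3] K3)
qed

lemma L_iso: assumes a0: "a \<in> Hom I i j"
  shows "is_nat_iso (Xc i) (Yc j) (fcompose (Yf a) (L i)) (fcompose (L j) (Xf a)) (phiL a)"
proof -
  note a = homE[OF a0]
  have nt: "is_nat_trans (Xc i) (Yc j) (fcompose (L j) (Xf a)) (fcompose (Yf a) (L i)) (\<lambda>x. fm (L j) (fm (Xf a) (\<epsilon> i x)))"
    unfolding is_nat_trans_def
  proof (intro conjI ballI allI impI)
    fix x assume x: "x \<in> Ob (Xc i)"
    show "fm (L j) (fm (Xf a) (\<epsilon> i x)) \<in> Hom (Yc j) (fo (fcompose (L j) (Xf a)) x) (fo (fcompose (Yf a) (L i)) x)"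
      using a x by (simp add: hom_iff)
  next
    fix x x' f assume f0: "f \<in> Hom (Xc i) x x'"
    have f: "arr (Xc i) f" "arr_dom (Xc i) f = x" "arr_cod (Xc i) f = x'" using f0 a by (simp_all add: hom_iff)
    have xx: "x \<in> Ob (Xc i)" "x' \<in> Ob (Xc i)" using f a dom_ob cod_ob catX by metis+
    show "cmp (Yc j) (fm (fcompose (Yf a) (L i)) f) (fm (L j) (fm (Xf a) (\<epsilon> i x))) =
          cmp (Yc j) (fm (L j) (fm (Xf a) (\<epsilon> i x'))) (fm (fcompose (L j) (Xf a)) f)"
      using a f xx arg_cong[OF eps_nat[OF a(4) f(1)], of "\<lambda>z. fm (L j) (fm (Xf a) z)"] by simp
  qed
  show ?thesis unfolding is_nat_iso_def
  proof (intro conjI exI)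
    show "is_nat_trans (Xc i) (Yc j) (fcompose (Yf a) (L i)) (fcompose (L j) (Xf a)) (phiL a)" by (rule L_nt[OF a0])
    show "is_nat_trans (Xc i) (Yc j) (fcompose (L j) (Xf a)) (fcompose (Yf a) (L i)) (\<lambda>x. fm (L j) (fm (Xf a) (\<epsilon> i x)))"
      by (rule nt)
    show "\<forall>x\<in>Ob (Xc i). cmp (Yc j) (fm (L j) (fm (Xf a) (\<epsilon> i x))) (phiL a x) = idm (Yc j) (fo (fcompose (Yf a) (L i)) x) \<and>
        cmp (Yc j) (phiL a x) (fm (L j) (fm (Xf a) (\<epsilon> i x))) = idm (Yc j) (fo (fcompose (L j) (Xf a)) x)"
    proof
      fix x assume x: "x \<in> Ob (Xc i)"
      have e1: "fm (L j) (fm (Xf a) (cmp (Xc i) (\<epsilon> i x) (\<epsilon>inv i x))) = fm (L j) (fm (Xf a) (idm (Xc i) (fo (R i) (fo (L i) x))))"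
        using ei_inv2[OF a(4) x] by simp
      have e2: "fm (L j) (fm (Xf a) (cmp (Xc i) (\<epsilon>inv i x) (\<epsilon> i x))) = fm (L j) (fm (Xf a) (idm (Xc i) x))"
        using ei_inv1[OF a(4) x] by simp
      show "cmp (Yc j) (fm (L j) (fm (Xf a) (\<epsilon> i x))) (phiL a x) = idm (Yc j) (fo (fcompose (Yf a) (L i)) x) \<and>
        cmp (Yc j) (phiL a x) (fm (L j) (fm (Xf a) (\<epsilon> i x))) = idm (Yc j) (fo (fcompose (L j) (Xf a)) x)"
        using a x e1 e2 by simp
    qed
  qed
qed

end

context L48 begin

lemma main:
  shows "is_oplax_functor I Yc Yf eta' theta'
    \<and> is_oplax_morphism I Yc Yf eta' theta' Xc Xf \<eta> \<theta> R phiR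
    \<and> ((\<forall>i\<in>Ob I. is_nat_iso (Xc i) (Xc i) idF (fcompose (R i) (L i)) (\<epsilon> i)) \<longrightarrow>
         (\<forall>i j a. a \<in> Hom I i j \<longrightarrow>
            is_nat_iso (Yc i) (Xc j) (fcompose (Xf a) (R i)) (fcompose (R j) (Yf a)) (phiR a))
       \<and> (\<forall>\<epsilon>inv. (\<forall>i\<in>Ob I. is_nat_trans (Xc i) (Xc i) (fcompose (R i) (L i)) idF (\<epsilon>inv i) \<and>
                    (\<forall>x\<in>Ob (Xc i). cmp (Xc i) (\<epsilon>inv i x) (\<epsilon> i x) = idm (Xc i) x \<and>
                       cmp (Xc i) (\<epsilon> i x) (\<epsilon>inv i x) = idm (Xc i) (fo (R i) (fo (L i) x))))
            \<longrightarrow> (let \<phi>L = (\<lambda>a x. fm (L (arr_cod I a)) (fm (Xf a) (\<epsilon>inv (arr_dom I a) x))) in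
                 is_oplax_morphism I Xc Xf \<eta> \<theta> Yc Yf eta' theta' L \<phi>L
                 \<and> (\<forall>i j a. a \<in> Hom I i j \<longrightarrow>
                      is_nat_iso (Xc i) (Yc j) (fcompose (Yf a) (L i)) (fcompose (L j) (Xf a)) (\<phi>L a)))))"
proof (intro conjI)
  show "is_oplax_functor I Yc Yf eta' theta'"
    unfolding is_oplax_functor_def
    apply (intro conjI allI impI ballI)
          apply (rule bspec[OF Yk], assumption)
         apply (erule Yf_kf)
        apply (erule eta'_nt)
       apply (erule conjE, erule (1) theta'_nt)
      apply (erule (1) Y_unit1)
     apply (erule (1) Y_unit2)
    apply (elim conjE, erule (3) Y_assoc)
    done
  show "is_oplax_morphism I Yc Yf eta' theta' Xc Xf \<eta> \<theta> R phiR"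
    unfolding is_oplax_morphism_def
    apply (intro conjI allI impI ballI)
       apply (erule R_kf)
      apply (erule R_nt)
     apply (erule (1) R_unit)
    apply (elim conjE, erule (2) R_comp)
    done
  show "(\<forall>i\<in>Ob I. is_nat_iso (Xc i) (Xc i) idF (fcompose (R i) (L i)) (\<epsilon> i)) \<longrightarrow>
         (\<forall>i j a. a \<in> Hom I i j \<longrightarrow>
            is_nat_iso (Yc i) (Xc j) (fcompose (Xf a) (R i)) (fcompose (R j) (Yf a)) (phiR a))
       \<and> (\<forall>\<epsilon>inv. (\<forall>i\<in>Ob I. is_nat_trans (Xc i) (Xc i) (fcompose (R i) (L i)) idF (\<epsilon>inv i) \<and>
                    (\<forall>x\<in>Ob (Xc i). cmp (Xc i) (\<epsilon>inv i x) (\<epsilon> i x) = idm (Xc i) x \<and>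
                       cmp (Xc i) (\<epsilon> i x) (\<epsilon>inv i x) = idm (Xc i) (fo (R i) (fo (L i) x))))
            \<longrightarrow> (let \<phi>L = (\<lambda>a x. fm (L (arr_cod I a)) (fm (Xf a) (\<epsilon>inv (arr_dom I a) x))) in
                 is_oplax_morphism I Xc Xf \<eta> \<theta> Yc Yf eta' theta' L \<phi>L
                 \<and> (\<forall>i j a. a \<in> Hom I i j \<longrightarrow>
                      is_nat_iso (Xc i) (Yc j) (fcompose (Yf a) (L i)) (fcompose (L j) (Xf a)) (\<phi>L a))))"
  proof (intro impI conjI allI)
    fix i j a assume iso: "\<forall>i\<in>Ob I. is_nat_iso (Xc i) (Xc i) idF (fcompose (R i) (L i)) (\<epsilon> i)"
      and a: "a \<in> Hom I i j"
    show "is_nat_iso (Yc i) (Xc j) (fcompose (Xf a) (R i)) (fcompose (R j) (Yf a)) (phiR a)"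
      by (rule R_iso[OF iso a])
  next
    fix \<epsilon>inv assume H: "\<forall>i\<in>Ob I. is_nat_trans (Xc i) (Xc i) (fcompose (R i) (L i)) idF (\<epsilon>inv i) \<and>
                    (\<forall>x\<in>Ob (Xc i). cmp (Xc i) (\<epsilon>inv i x) (\<epsilon> i x) = idm (Xc i) x \<and>
                       cmp (Xc i) (\<epsilon> i x) (\<epsilon>inv i x) = idm (Xc i) (fo (R i) (fo (L i) x)))"
    interpret E: L48i I Xc Xf \<eta> \<theta> Yc L R \<epsilon> \<zeta> \<epsilon>inv
      by (rule L48i.intro[OF L48_axioms L48i_axioms.intro[OF H]])
    show "let \<phi>L = (\<lambda>a x. fm (L (arr_cod I a)) (fm (Xf a) (\<epsilon>inv (arr_dom I a) x))) in
                 is_oplax_morphism I Xc Xf \<eta> \<theta> Yc Yf eta' theta' L \<phi>L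
                 \<and> (\<forall>i j a. a \<in> Hom I i j \<longrightarrow>
                      is_nat_iso (Xc i) (Yc j) (fcompose (Yf a) (L i)) (fcompose (L j) (Xf a)) (\<phi>L a))"
      unfolding Let_def is_oplax_morphism_def
      apply (intro conjI allI impI ballI)
          apply (erule L_kf)
         apply (erule E.L_nt)
        apply (erule (1) E.L_unit)
       apply (elim conjE, erule (2) E.L_comp)
      apply (erule E.L_iso)
      done
  qed
qed

end

theorem lemma4p8:
  fixes I :: "('io, 'ia) cat"
    and Xc :: "'io \<Rightarrow> ('o, 'm, 'k::comm_ring_1) kcat"
    and Xf :: "'ia \<Rightarrow> ('o, 'm) func"
    and \<eta> :: "'io \<Rightarrow> 'o \<Rightarrow> 'm"
    and \<theta> :: "'ia \<Rightarrow> 'ia \<Rightarrow> 'o \<Rightarrow> 'm"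
    and Yc :: "'io \<Rightarrow> ('o, 'm, 'k) kcat"
    and L R :: "'io \<Rightarrow> ('o, 'm) func"
    and \<epsilon> \<zeta> :: "'io \<Rightarrow> 'o \<Rightarrow> 'm"
  assumes "is_category I"
    and "is_oplax_functor I Xc Xf \<eta> \<theta>"
    and "\<forall>i\<in>Ob I. is_kcategory (Yc i)"
    and "\<forall>i\<in>Ob I. is_adjunction (Xc i) (Yc i) (L i) (R i) (\<epsilon> i) (\<zeta> i)"
  defines "Yf \<equiv> \<lambda>a. fcompose (L (arr_cod I a)) (fcompose (Xf a) (R (arr_dom I a)))"
    and "\<eta>' \<equiv> \<lambda>i y. cmp (Yc i) (\<zeta> i y) (fm (L i) (\<eta> i (fo (R i) y)))"
    and "\<theta>' \<equiv> \<lambda>b a y.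
           cmp (Yc (arr_cod I b))
             (fm (L (arr_cod I b)) (fm (Xf b) (\<epsilon> (arr_cod I a) (fo (Xf a) (fo (R (arr_dom I a)) y)))))
             (fm (L (arr_cod I b)) (\<theta> b a (fo (R (arr_dom I a)) y)))"
    and "\<phi>R \<equiv> \<lambda>a y. \<epsilon> (arr_cod I a) (fo (Xf a) (fo (R (arr_dom I a)) y))"
  shows "is_oplax_functor I Yc Yf \<eta>' \<theta>'
    \<and> is_oplax_morphism I Yc Yf \<eta>' \<theta>' Xc Xf \<eta> \<theta> R \<phi>R
    \<and> ((\<forall>i\<in>Ob I. is_nat_iso (Xc i) (Xc i) idF (fcompose (R i) (L i)) (\<epsilon> i)) \<longrightarrow>
         (\<forall>i j a. a \<in> Hom I i j \<longrightarrow>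
            is_nat_iso (Yc i) (Xc j) (fcompose (Xf a) (R i)) (fcompose (R j) (Yf a)) (\<phi>R a))
       \<and> (\<forall>\<epsilon>inv. (\<forall>i\<in>Ob I. is_nat_trans (Xc i) (Xc i) (fcompose (R i) (L i)) idF (\<epsilon>inv i) \<and>
                    (\<forall>x\<in>Ob (Xc i). cmp (Xc i) (\<epsilon>inv i x) (\<epsilon> i x) = idm (Xc i) x \<and>
                       cmp (Xc i) (\<epsilon> i x) (\<epsilon>inv i x) = idm (Xc i) (fo (R i) (fo (L i) x))))
            \<longrightarrow> (let \<phi>L = (\<lambda>a x. fm (L (arr_cod I a)) (fm (Xf a) (\<epsilon>inv (arr_dom I a) x))) in
                 is_oplax_morphism I Xc Xf \<eta> \<theta> Yc Yf \<eta>' \<theta>' L \<phi>L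
                 \<and> (\<forall>i j a. a \<in> Hom I i j \<longrightarrow>
                      is_nat_iso (Xc i) (Yc j) (fcompose (Yf a) (L i)) (fcompose (L j) (Xf a)) (\<phi>L a)))))"
proof -
  interpret L48 I Xc Xf \<eta> \<theta> Yc L R \<epsilon> \<zeta>
    by (rule L48.intro) (fact assms)+
  show ?thesis unfolding assms(5-8) by (rule main)
qed

end
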